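(* Let $n\geq1$ and $A\in M_n(\mathbb Z)$ with $\det(A)\neq0$. Then there exist integers $n_1,n_2\geq0$ with $n_1+n_2=n$, a matrix $A_1\in M_{n_1}(\mathbb Z)$ all of whose eigenvalues are roots of unity, a positive matrix $A_2\in M_{n_2}(\mathbb Z)$, and $P\in M_n(\mathbb Z)$ with $\det(P)\neq0$ such that $\varphi_A\circ\varphi_P=\varphi_P\circ g$, where $g:\mathbb G_m^n=\mathbb G_m^{n_1}\times\mathbb G_m^{n_2}\to\mathbb G_m^{n_1}\times\mathbb G_m^{n_2}$ is $g(u_1,u_2)=(\varphi_{A_1}(u_1),\varphi_{A_2}(u_2))$.
   Context: Work over an algebraically closed field of characteristic zero. For $A=(a_{ij})\in M_n(\mathbb Z)$, $\varphi_A:\mathbb G_m^n\to\mathbb G_m^n$ is the group endomorphism $(u_1,\dots,u_n)\mapsto(u_1^{a_{11}}\cdots u_n^{a_{1n}},\dots,u_1^{a_{n1}}\cdots u_n^{a_{nn}})$. A matrix $A$ is positive if every eigenvalue of $A$ is neither $0$ nor a root of unity. *)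

theory Defs
  imports Complex_Main "HOL-Computational_Algebra.Polynomial" "Jordan_Normal_Form.Char_Poly"
begin

definition Gm :: "nat \<Rightarrow> 'k::field vec set" where
  "Gm n = {u \<in> carrier_vec n. \<forall>i<n. u $ i \<noteq> 0}"

definition phi :: "int mat \<Rightarrow> 'k::field vec \<Rightarrow> 'k vec" where
  "phi A u = vec (dim_row A) (\<lambda>i. \<Prod>j<dim_col A. (u $ j) powi (A $$ (i, j)))"

definition root_of_unity :: "complex \<Rightarrow> bool" where
  "root_of_unity z \<longleftrightarrow> (\<exists>m::nat. m > 0 \<and> z ^ m = 1)"

definition int_eigenvalue :: "int mat \<Rightarrow> complex \<Rightarrow> bool" where
  "int_eigenvalue A z \<longleftrightarrow> eigenvalue (map_mat complex_of_int A) z"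

definition positive_mat :: "int mat \<Rightarrow> bool" where
  "positive_mat A \<longleftrightarrow> (\<forall>z. int_eigenvalue A z \<longrightarrow> z \<noteq> 0 \<and> \<not> root_of_unity z)"

end

theory Submission
  imports Defs "HOL-Computational_Algebra.Polynomial_Factorial" "HOL-Computational_Algebra.Field_as_Ring"
begin


definition mev :: "'a::comm_ring_1 poly \<Rightarrow> 'a mat \<Rightarrow> 'a mat" where
  "mev p A = fold_coeffs (\<lambda>c M. c \<cdot>\<^sub>m 1\<^sub>m (dim_row A) + A * M) p (0\<^sub>m (dim_row A) (dim_row A))"

lemma mev_0[simp]: "mev 0 A = 0\<^sub>m (dim_row A) (dim_row A)"
  by (simp add: mev_def)

lemma mev_pCons: assumes A: "A \<in> carrier_mat n n"
  shows "mev (pCons a p) A = a \<cdot>\<^sub>m 1\<^sub>m n + A * mev p A"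
proof (cases "p = 0 \<and> a = 0")
  case True
  then show ?thesis using A by (auto simp: mev_def)
next
  case False
  then have "coeffs (pCons a p) = a # coeffs p" by auto
  then show ?thesis using A by (simp add: mev_def fold_coeffs_def)
qed

lemma mev_carrier[simp]: assumes A: "A \<in> carrier_mat n n"
  shows "mev p A \<in> carrier_mat n n"
proof (induct p)
  case 0 then show ?case using A by simp
next
  case (pCons a p) then show ?case using A by (simp add: mev_pCons[OF A])
qed

lemma mev_dims[simp]: assumes A: "A \<in> carrier_mat n n"
  shows "dim_row (mev p A) = n" "dim_col (mev p A) = n"
  using mev_carrier[OF A] by auto

lemma mev_add: assumes A: "A \<in> carrier_mat n n"
  shows "mev (p + q) A = mev p A + mev q A"
proof (induct p q rule: poly_induct2)
  case 0 then show ?case using A by simp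
next
  case (pCons a p b q)
  have c: "mev p A \<in> carrier_mat n n" "mev q A \<in> carrier_mat n n" using A by auto
  have "mev (pCons a p + pCons b q) A = (a + b) \<cdot>\<^sub>m 1\<^sub>m n + A * (mev p A + mev q A)"
    using pCons by (simp add: mev_pCons[OF A])
  also have "\<dots> = (a \<cdot>\<^sub>m 1\<^sub>m n + A * mev p A) + (b \<cdot>\<^sub>m 1\<^sub>m n + A * mev q A)"
    using A c by (intro eq_matI) (auto simp: scalar_prod_def sum.distrib distrib_left distrib_right)
  finally show ?case by (simp add: mev_pCons[OF A])
qed

lemma mev_smult: assumes A: "A \<in> carrier_mat n n"
  shows "mev (Polynomial.smult c p) A = c \<cdot>\<^sub>m mev p A"
proof (induct p)
  case 0 then show ?case using A by (auto intro!: eq_matI)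
next
  case (pCons a p)
  have c: "mev p A \<in> carrier_mat n n" using A by auto
  show ?case using pCons A c
    by (simp add: mev_pCons[OF A]) (intro eq_matI, auto simp: scalar_prod_def sum_distrib_left distrib_left mult.left_commute)
qed

lemma mev_pCons0: assumes A: "A \<in> carrier_mat n n"
  shows "mev (pCons 0 p) A = A * mev p A"
  using A by (simp add: mev_pCons[OF A]) (intro eq_matI, auto)

lemma mev_mult: assumes A: "A \<in> carrier_mat n n"
  shows "mev (p * q) A = mev p A * mev q A"
proof (induct p)
  case 0 then show ?case using A by (auto intro!: eq_matI simp: scalar_prod_def)
next
  case (pCons a p)
  have c: "mev p A \<in> carrier_mat n n" "mev q A \<in> carrier_mat n n" using A by auto
  have "mev (pCons a p * q) A = a \<cdot>\<^sub>m mev q A + A * (mev p A * mev q A)"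
    using pCons by (simp add: mev_add[OF A] mev_smult[OF A] mev_pCons0[OF A])
  also have "\<dots> = (a \<cdot>\<^sub>m 1\<^sub>m n + A * mev p A) * mev q A"
  proof -
    have "(a \<cdot>\<^sub>m 1\<^sub>m n + A * mev p A) * mev q A = (a \<cdot>\<^sub>m 1\<^sub>m n) * mev q A + (A * mev p A) * mev q A"
      using A c by (intro add_mult_distrib_mat) auto
    also have "(a \<cdot>\<^sub>m 1\<^sub>m n) * mev q A = a \<cdot>\<^sub>m mev q A"
      using c by (simp add: mult_smult_assoc_mat[of _ n n _ n])
    also have "(A * mev p A) * mev q A = A * (mev p A * mev q A)"
      using A c by (intro assoc_mult_mat) auto
    finally show ?thesis by simp
  qed
  finally show ?case by (simp add: mev_pCons[OF A])
qed

lemma mev_const: assumes A: "A \<in> carrier_mat n n"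
  shows "mev [:c:] A = c \<cdot>\<^sub>m 1\<^sub>m n"
  using A by (simp add: mev_pCons[OF A])

lemma mev_1: assumes A: "A \<in> carrier_mat n n"
  shows "mev 1 A = 1\<^sub>m n"
  using mev_const[OF A, of 1] by (simp add: one_pCons) (intro eq_matI, auto)

lemma mev_x: assumes A: "A \<in> carrier_mat n n"
  shows "mev [:0,1:] A = A"
  using A mev_1[OF A] by (simp add: mev_pCons0[OF A] one_pCons[symmetric])

lemma mev_comm: assumes A: "A \<in> carrier_mat n n"
  shows "mev p A * mev q A = mev q A * mev p A"
  by (metis A mev_mult mult.commute)

lemma mev_A_comm: assumes A: "A \<in> carrier_mat n n"
  shows "A * mev p A = mev p A * A"
  using mev_comm[OF A, of "[:0,1:]" p] by (simp add: mev_x[OF A])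

lemma mev_intertwine: assumes A: "A \<in> carrier_mat n n" and B: "B \<in> carrier_mat n d"
  and C: "C \<in> carrier_mat d d" and AB: "A * B = B * C"
  shows "mev p A * B = B * mev p C"
proof (induct p)
  case 0 then show ?case using A B C by (auto intro!: eq_matI simp: scalar_prod_def)
next
  case (pCons a p)
  have c: "mev p A \<in> carrier_mat n n" "mev p C \<in> carrier_mat d d" using A C by auto
  have "mev (pCons a p) A * B = (a \<cdot>\<^sub>m 1\<^sub>m n) * B + A * (mev p A * B)"
    using A B c by (simp add: mev_pCons[OF A] add_mult_distrib_mat[of _ n n _ _ d] assoc_mult_mat[of _ n n _ n _ d])
  also have "\<dots> = B * (a \<cdot>\<^sub>m 1\<^sub>m d) + (A * B) * mev p C"
  proof -
    have "(a \<cdot>\<^sub>m 1\<^sub>m n) * B = a \<cdot>\<^sub>m B" using B by (simp add: mult_smult_assoc_mat[of _ n n])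
    moreover have "B * (a \<cdot>\<^sub>m 1\<^sub>m d) = a \<cdot>\<^sub>m B" using B mult_smult_distrib[OF B, of "1\<^sub>m d" d, where k=a] by simp
    moreover have "A * (mev p A * B) = (A * B) * mev p C" using pCons assoc_mult_mat[OF A B c(2)] by simp
    ultimately show ?thesis by simp
  qed
  also have "\<dots> = B * (a \<cdot>\<^sub>m 1\<^sub>m d + C * mev p C)"
    using A B C c AB assoc_mult_mat[OF B C c(2)] mult_add_distrib_mat[OF B, of "a \<cdot>\<^sub>m 1\<^sub>m d" d "C * mev p C"] by simp
  finally show ?case by (simp add: mev_pCons[OF C])
qed

lemma smult_one_mat_vec: "x \<in> carrier_vec n \<Longrightarrow> (a \<cdot>\<^sub>m 1\<^sub>m n) *\<^sub>v x = (a::'a::comm_ring_1) \<cdot>\<^sub>v x"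
proof (intro eq_vecI)
  fix i assume x: "x \<in> carrier_vec n" and i: "i < dim_vec (a \<cdot>\<^sub>v x)"
  then have "((a \<cdot>\<^sub>m 1\<^sub>m n) *\<^sub>v x) $ i = (\<Sum>j\<in>{0..<n}. a * (if j = i then 1 else 0) * x $ j)"
    by (auto simp: scalar_prod_def intro!: sum.cong)
  also have "\<dots> = (\<Sum>j\<in>{0..<n}. (if i = j then a * x $ j else 0))"
    by (rule sum.cong) auto
  also have "\<dots> = a * x $ i" using i x by (simp add: sum.delta)
  finally show "((a \<cdot>\<^sub>m 1\<^sub>m n) *\<^sub>v x) $ i = (a \<cdot>\<^sub>v x) $ i" using i by simp
qed auto

lemma mev_eigen: fixes A :: "'a::field mat" assumes A: "A \<in> carrier_mat n n" and x: "x \<in> carrier_vec n"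
  and Ax: "A *\<^sub>v x = l \<cdot>\<^sub>v x"
  shows "mev p A *\<^sub>v x = poly p l \<cdot>\<^sub>v x"
proof (induct p)
  case 0 then show ?case using A x by (auto intro!: eq_vecI simp: scalar_prod_def)
next
  case (pCons a p)
  have c: "mev p A \<in> carrier_mat n n" using A by auto
  have "mev (pCons a p) A *\<^sub>v x = (a \<cdot>\<^sub>m 1\<^sub>m n) *\<^sub>v x + A *\<^sub>v (mev p A *\<^sub>v x)"
    using A x c assoc_mult_mat_vec[OF A c x] by (simp add: mev_pCons[OF A] add_mult_distrib_mat_vec[of _ n n])
  also have "\<dots> = a \<cdot>\<^sub>v x + A *\<^sub>v (poly p l \<cdot>\<^sub>v x)" using pCons A x
    by (simp add: smult_one_mat_vec)
  also have "\<dots> = a \<cdot>\<^sub>v x + poly p l \<cdot>\<^sub>v (l \<cdot>\<^sub>v x)" using A x Ax by (simp add: mult_mat_vec)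
  also have "\<dots> = poly (pCons a p) l \<cdot>\<^sub>v x"
    by (intro eq_vecI) (auto simp: algebra_simps)
  finally show ?case .
qed

lemma map_mat_add_rat: "B \<in> carrier_mat n m \<Longrightarrow> C \<in> carrier_mat n m \<Longrightarrow>
  map_mat (of_rat :: rat \<Rightarrow> complex) (B + C) = map_mat of_rat B + map_mat of_rat C"
  by (intro eq_matI) (auto simp: of_rat_add)

lemma map_mat_smult_one_rat: "map_mat (of_rat :: rat \<Rightarrow> complex) (a \<cdot>\<^sub>m 1\<^sub>m n) = of_rat a \<cdot>\<^sub>m 1\<^sub>m n"
  by (intro eq_matI) auto

lemma mev_hom: assumes A: "A \<in> carrier_mat n n"
  shows "map_mat (of_rat :: rat \<Rightarrow> complex) (mev p A) = mev (map_poly of_rat p) (map_mat of_rat A)"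
proof (induct p)
  case 0 then show ?case using A by (auto intro!: eq_matI)
next
  case (pCons a p)
  have c: "mev p A \<in> carrier_mat n n" using A by auto
  have A': "map_mat (of_rat :: rat \<Rightarrow> complex) A \<in> carrier_mat n n" using A by simp
  show ?case using A c pCons
    by (simp add: mev_pCons[OF A] mev_pCons[OF A'] map_poly_pCons map_mat_add_rat[of _ n n]
      of_rat_hom.mat_hom_mult[OF A c] map_mat_smult_one_rat)
qed


lemma mv_index_shift: assumes B: "B \<in> carrier_mat m (Suc d)" and y: "y \<in> carrier_vec (Suc d)" and i: "i < m"
  shows "(B *\<^sub>v y) $ i = B $$ (i,0) * y $ 0 + (\<Sum>j<d. B $$ (i, Suc j) * y $ Suc j)"
proof -
  have "(B *\<^sub>v y) $ i = (\<Sum>j\<in>{0..<Suc d}. B $$ (i,j) * y $ j)" using B y i by (simp add: scalar_prod_def)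
  also have "\<dots> = B $$ (i,0) * y $ 0 + (\<Sum>j<d. B $$ (i, Suc j) * y $ Suc j)"
    by (subst sum.atLeast0_lessThan_Suc_shift) (simp add: lessThan_atLeast0)
  finally show ?thesis .
qed

lemma mv_index: assumes B: "B \<in> carrier_mat m d" and y: "y \<in> carrier_vec d" and i: "i < m"
  shows "(B *\<^sub>v y) $ i = (\<Sum>j<d. B $$ (i, j) * y $ j)"
  using B y i by (simp add: scalar_prod_def lessThan_atLeast0)

lemma vCons0_add: "x \<in> carrier_vec n \<Longrightarrow> y \<in> carrier_vec n \<Longrightarrow> vCons 0 (x + y) = vCons (0::int) x + vCons 0 y"
  by (intro eq_vecI) (auto simp: vCons_def split: nat.splits)

lemma vCons0_smult: "vCons 0 (c \<cdot>\<^sub>v x) = c \<cdot>\<^sub>v vCons (0::int) x"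
  by (intro eq_vecI) (auto simp: vCons_def split: nat.splits)

lemma vCons0_zero: "vCons 0 (0\<^sub>v n) = (0\<^sub>v (Suc n) :: int vec)"
  by (intro eq_vecI) (auto simp: vCons_def split: nat.splits)

lemma lattice:
  fixes L :: "int vec set"
  assumes "L \<subseteq> carrier_vec n" and "0\<^sub>v n \<in> L" and "\<And>x y. x \<in> L \<Longrightarrow> y \<in> L \<Longrightarrow> x + y \<in> L"
    and "\<And>c x. x \<in> L \<Longrightarrow> c \<cdot>\<^sub>v x \<in> L"
  shows "\<exists>d B. B \<in> carrier_mat n d \<and> (\<forall>j<d. col B j \<in> L) \<and>
     (\<forall>y\<in>carrier_vec d. B *\<^sub>v y = 0\<^sub>v n \<longrightarrow> y = 0\<^sub>v d) \<and> (\<forall>x\<in>L. \<exists>y\<in>carrier_vec d. x = B *\<^sub>v y)"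
  using assms
proof (induct n arbitrary: L)
  case 0
  show ?case
  proof (intro exI[of _ 0] exI[of _ "0\<^sub>m 0 0"] conjI ballI impI allI)
    fix x assume "x \<in> L"
    then have "x \<in> carrier_vec 0" using 0 by auto
    then have "x = 0\<^sub>v 0" by (intro eq_vecI) auto
    then show "\<exists>y\<in>carrier_vec 0. x = 0\<^sub>m 0 0 *\<^sub>v y" by (intro bexI[of _ "0\<^sub>v 0"]) auto
  qed (auto intro!: eq_vecI)
next
  case (Suc n)
  note sub = Suc.prems(1) and zL = Suc.prems(2) and addL = Suc.prems(3) and smL = Suc.prems(4)
  define L' where "L' = {x \<in> carrier_vec n. vCons 0 x \<in> L}"
  have "\<exists>d B. B \<in> carrier_mat n d \<and> (\<forall>j<d. col B j \<in> L') \<and>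
     (\<forall>y\<in>carrier_vec d. B *\<^sub>v y = 0\<^sub>v n \<longrightarrow> y = 0\<^sub>v d) \<and> (\<forall>x\<in>L'. \<exists>y\<in>carrier_vec d. x = B *\<^sub>v y)"
  proof (rule Suc.hyps)
    show "L' \<subseteq> carrier_vec n" unfolding L'_def by auto
    show "0\<^sub>v n \<in> L'" unfolding L'_def using zL by (simp add: vCons0_zero)
    show "x + y \<in> L'" if "x \<in> L'" "y \<in> L'" for x y
      using that addL unfolding L'_def by (auto simp: vCons0_add)
    show "c \<cdot>\<^sub>v x \<in> L'" if "x \<in> L'" for c x
      using that smL unfolding L'_def by (auto simp: vCons0_smult)
  qed
  then obtain d' B' where B': "B' \<in> carrier_mat n d'" and colB': "\<forall>j<d'. col B' j \<in> L'"
    and injB': "\<forall>y\<in>carrier_vec d'. B' *\<^sub>v y = 0\<^sub>v n \<longrightarrow> y = 0\<^sub>v d'"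
    and spanB': "\<forall>x\<in>L'. \<exists>y\<in>carrier_vec d'. x = B' *\<^sub>v y" by blast
  define tlv where "tlv x = vec n (\<lambda>i. x $ Suc i)" for x :: "int vec"
  have tlv_cons: "x = vCons (x $ 0) (tlv x)" if "x \<in> carrier_vec (Suc n)" for x
    using that by (intro eq_vecI) (auto simp: vCons_def tlv_def split: nat.splits)
  show ?case
  proof (cases "\<forall>x\<in>L. x $ 0 = 0")
    case True
    define B where "B = mat (Suc n) d' (\<lambda>(i,j). if i = 0 then 0 else B' $$ (i-1, j))"
    have B: "B \<in> carrier_mat (Suc n) d'" unfolding B_def by auto
    have Bidx: "(B *\<^sub>v y) $ Suc i = (B' *\<^sub>v y) $ i" if "y \<in> carrier_vec d'" "i < n" for y i
    proof -
      have "(B *\<^sub>v y) $ Suc i = (\<Sum>j<d'. B$$(Suc i, j) * y$j)" by (rule mv_index[OF B that(1)]) (simp add: that)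
      also have "\<dots> = (\<Sum>j<d'. B'$$(i,j)*y$j)" unfolding B_def using that by (intro sum.cong) auto
      also have "\<dots> = (B' *\<^sub>v y)$i" by (rule mv_index[OF B' that(1) that(2), symmetric])
      finally show ?thesis .
    qed
    have Bidx0: "(B *\<^sub>v y) $ 0 = 0" if "y \<in> carrier_vec d'" for y
    proof -
      have "(B *\<^sub>v y) $ 0 = (\<Sum>j<d'. B$$(0, j) * y$j)" by (rule mv_index[OF B that]) simp
      also have "\<dots> = 0" unfolding B_def by (intro sum.neutral) auto
      finally show ?thesis .
    qed
    show ?thesis
    proof (intro exI[of _ d'] exI[of _ B] conjI ballI impI allI)
      show "B \<in> carrier_mat (Suc n) d'" by (rule B)
      fix j assume j: "j < d'"
      have "col B j = vCons 0 (col B' j)" using j B' unfolding B_def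
        by (intro eq_vecI) (auto simp: vCons_def split: nat.splits)
      then show "col B j \<in> L" using colB' j unfolding L'_def by auto
    next
      fix y assume y: "y \<in> carrier_vec d'" and By: "B *\<^sub>v y = 0\<^sub>v (Suc n)"
      have "B' *\<^sub>v y = 0\<^sub>v n"
      proof (intro eq_vecI)
        fix i assume "i < dim_vec (0\<^sub>v n :: int vec)"
        then have i: "i < n" by simp
        have "(B' *\<^sub>v y) $ i = (B *\<^sub>v y) $ Suc i" using Bidx[OF y i] by simp
        also have "\<dots> = 0" using By i by simp
        finally show "(B' *\<^sub>v y) $ i = 0\<^sub>v n $ i" using i by simp
      qed (use B' in auto)
      then show "y = 0\<^sub>v d'" using injB' y by auto
    next
      fix x assume x: "x \<in> L"
      have xc: "x \<in> carrier_vec (Suc n)" using x sub by auto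
      have x0: "x $ 0 = 0" using True x by auto
      have "tlv x \<in> L'" unfolding L'_def using x tlv_cons[OF xc] x0 by (auto simp: tlv_def)
      then obtain y where y: "y \<in> carrier_vec d'" and ty: "tlv x = B' *\<^sub>v y" using spanB' by auto
      have "x = B *\<^sub>v y"
      proof (intro eq_vecI)
        fix i assume "i < dim_vec (B *\<^sub>v y)"
        then have i: "i < Suc n" using B by simp
        show "x $ i = (B *\<^sub>v y) $ i"
        proof (cases i)
          case 0 then show ?thesis using x0 Bidx0[OF y] by simp
        next
          case (Suc k)
          then have k: "k < n" using i by simp
          have "x $ i = tlv x $ k" unfolding tlv_def using Suc k by simp
          also have "\<dots> = (B' *\<^sub>v y) $ k" using ty by simp
          also have "\<dots> = (B *\<^sub>v y) $ i" using Bidx[OF y k] Suc by simp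
          finally show ?thesis .
        qed
      qed (use xc B in auto)
      then show "\<exists>y\<in>carrier_vec d'. x = B *\<^sub>v y" using y by auto
    qed
  next
    case False
    then obtain x1 where x1: "x1 \<in> L" "x1 $ 0 \<noteq> 0" by auto
    define S where "S = {k::nat. k > 0 \<and> (\<exists>x\<in>L. x $ 0 = int k)}"
    have "\<exists>k. k \<in> S"
    proof (cases "x1 $ 0 > 0")
      case True then show ?thesis using x1 unfolding S_def
        by (intro exI[of _ "nat (x1 $ 0)"]) auto
    next
      case False
      have "(-1) \<cdot>\<^sub>v x1 \<in> L" using smL x1 by auto
      moreover have "((-1) \<cdot>\<^sub>v x1) $ 0 = - (x1 $ 0)" using x1 sub by auto
      ultimately show ?thesis using x1 False unfolding S_def
        by (intro exI[of _ "nat (- x1 $ 0)"]) auto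
    qed
    then have gS: "(LEAST k. k \<in> S) \<in> S" by (rule LeastI_ex)
    define g where "g = (LEAST k. k \<in> S)"
    have gmin: "g \<le> k" if "k \<in> S" for k unfolding g_def using that by (rule Least_le)
    have "g \<in> S" using gS unfolding g_def .
    then obtain w where w: "w \<in> L" "w $ 0 = int g" and gpos: "g > 0" unfolding S_def by auto
    have wc: "w \<in> carrier_vec (Suc n)" using w sub by auto
    define B where "B = mat (Suc n) (Suc d') (\<lambda>(i,j). if j = 0 then w $ i else if i = 0 then 0 else B' $$ (i-1, j-1))"
    have B: "B \<in> carrier_mat (Suc n) (Suc d')" unfolding B_def by auto
    have Bidx0: "(B *\<^sub>v y) $ 0 = int g * y $ 0" if "y \<in> carrier_vec (Suc d')" for y
    proof -
      have "(B *\<^sub>v y) $ 0 = B $$ (0,0) * y $ 0 + (\<Sum>j<d'. B $$ (0, Suc j) * y $ Suc j)"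
        by (rule mv_index_shift[OF B that]) simp
      also have "\<dots> = int g * y $ 0" unfolding B_def using w by simp
      finally show ?thesis .
    qed
    have BidxS: "(B *\<^sub>v y) $ Suc i = w $ Suc i * y $ 0 + (B' *\<^sub>v vec d' (\<lambda>j. y $ Suc j)) $ i"
      if "y \<in> carrier_vec (Suc d')" "i < n" for y i
    proof -
      have "(B *\<^sub>v y) $ Suc i = B $$ (Suc i,0) * y $ 0 + (\<Sum>j<d'. B $$ (Suc i, Suc j) * y $ Suc j)"
        by (rule mv_index_shift[OF B that(1)]) (simp add: that)
      also have "\<dots> = w $ Suc i * y $ 0 + (\<Sum>j<d'. B' $$ (i, j) * vec d' (\<lambda>j. y $ Suc j) $ j)"
        unfolding B_def using that by (auto intro!: sum.cong)
      also have "(\<Sum>j<d'. B' $$ (i, j) * vec d' (\<lambda>j. y $ Suc j) $ j) = (B' *\<^sub>v vec d' (\<lambda>j. y $ Suc j)) $ i"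
        by (rule mv_index[OF B' _ that(2), symmetric]) simp
      finally show ?thesis .
    qed
    show ?thesis
    proof (intro exI[of _ "Suc d'"] exI[of _ B] conjI ballI impI allI)
      show "B \<in> carrier_mat (Suc n) (Suc d')" by (rule B)
      fix j assume j: "j < Suc d'"
      show "col B j \<in> L"
      proof (cases j)
        case 0
        have "col B j = w" using 0 wc unfolding B_def by (intro eq_vecI) auto
        then show ?thesis using w by simp
      next
        case (Suc k)
        have "col B j = vCons 0 (col B' k)" using j B' Suc unfolding B_def
          by (intro eq_vecI) (auto simp: vCons_def split: nat.splits)
        then show ?thesis using colB' j Suc unfolding L'_def by auto
      qed
    next
      fix y assume y: "y \<in> carrier_vec (Suc d')" and By: "B *\<^sub>v y = 0\<^sub>v (Suc n)"
      have y0: "y $ 0 = 0" using Bidx0[OF y] By gpos by simp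
      have "B' *\<^sub>v vec d' (\<lambda>j. y $ Suc j) = 0\<^sub>v n"
      proof (intro eq_vecI)
        fix i assume "i < dim_vec (0\<^sub>v n :: int vec)"
        then have i: "i < n" by simp
        have "(B' *\<^sub>v vec d' (\<lambda>j. y $ Suc j)) $ i = (B *\<^sub>v y) $ Suc i" using BidxS[OF y i] y0 by simp
        also have "\<dots> = 0" using By i by simp
        finally show "(B' *\<^sub>v vec d' (\<lambda>j. y $ Suc j)) $ i = 0\<^sub>v n $ i" using i by simp
      qed (use B' in auto)
      then have "vec d' (\<lambda>j. y $ Suc j) = 0\<^sub>v d'" using injB' by auto
      then have "\<forall>j<d'. y $ Suc j = 0" by (metis index_vec index_zero_vec(1))
      show "y = 0\<^sub>v (Suc d')"
      proof (intro eq_vecI)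
        fix i assume "i < dim_vec (0\<^sub>v (Suc d') :: int vec)"
        then have i: "i < Suc d'" by simp
        show "y $ i = 0\<^sub>v (Suc d') $ i"
        proof (cases i)
          case 0 then show ?thesis using y0 by simp
        next
          case (Suc k) then show ?thesis using i \<open>\<forall>j<d'. y $ Suc j = 0\<close> by simp
        qed
      qed (use y in simp)
    next
      fix x assume x: "x \<in> L"
      have xc: "x \<in> carrier_vec (Suc n)" using x sub by auto
      define q where "q = x $ 0 div int g"
      define x' where "x' = x + (- q) \<cdot>\<^sub>v w"
      have x'L: "x' \<in> L" unfolding x'_def using x w addL smL by auto
      have x'c: "x' \<in> carrier_vec (Suc n)" using x'L sub by auto
      have "x' $ 0 = x $ 0 - q * int g" unfolding x'_def using xc wc w by simp
      also have "\<dots> = x $ 0 mod int g" unfolding q_def by (simp add: minus_div_mult_eq_mod)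
      finally have x'0: "x' $ 0 = x $ 0 mod int g" .
      have "x' $ 0 = 0"
      proof (rule ccontr)
        assume ne: "x' $ 0 \<noteq> 0"
        have "x' $ 0 \<ge> 0" using x'0 gpos by simp
        then have pos: "x' $ 0 > 0" using ne by linarith
        then have "nat (x' $ 0) \<in> S" unfolding S_def using x'L by auto
        then have "g \<le> nat (x' $ 0)" by (rule gmin)
        moreover have "x' $ 0 < int g" using x'0 gpos by simp
        ultimately show False using pos by linarith
      qed
      then have "tlv x' \<in> L'" unfolding L'_def using x'L tlv_cons[OF x'c] by (auto simp: tlv_def)
      then obtain y' where y': "y' \<in> carrier_vec d'" and ty: "tlv x' = B' *\<^sub>v y'" using spanB' by auto
      define y where "y = vCons q y'"
      have yc: "y \<in> carrier_vec (Suc d')" using y' unfolding y_def by (simp add: vCons_def)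
      have yt: "vec d' (\<lambda>j. y $ Suc j) = y'" using y' unfolding y_def by (intro eq_vecI) auto
      have "x = B *\<^sub>v y"
      proof (intro eq_vecI)
        fix i assume "i < dim_vec (B *\<^sub>v y)"
        then have i: "i < Suc n" using B by simp
        show "x $ i = (B *\<^sub>v y) $ i"
        proof (cases i)
          case 0
          have "x $ 0 = int g * q" using \<open>x' $ 0 = 0\<close> x'0 unfolding q_def
            by (metis mult_div_mod_eq add_0_right mult.commute)
          then show ?thesis using 0 Bidx0[OF yc] by (simp add: y_def)
        next
          case (Suc k)
          then have k: "k < n" using i by simp
          have "x $ i = x' $ Suc k + q * w $ Suc k" unfolding x'_def using xc wc Suc k by simp
          also have "x' $ Suc k = tlv x' $ k" unfolding tlv_def using k by simp
          also have "\<dots> = (B' *\<^sub>v y') $ k" using ty by simp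
          finally show ?thesis using BidxS[OF yc k] Suc yt by (simp add: y_def)
        qed
      qed (use xc B in auto)
      then show "\<exists>y\<in>carrier_vec (Suc d'). x = B *\<^sub>v y" using yc by auto
    qed
  qed
qed


lemma pow_comm: assumes A: "A \<in> carrier_mat n n" shows "A * A ^\<^sub>m k = A ^\<^sub>m k * A"
proof (induct k)
  case 0 then show ?case using A by simp
next
  case (Suc k)
  have "A * A ^\<^sub>m Suc k = (A * A ^\<^sub>m k) * A" using A by (simp add: assoc_mult_mat[of _ n n _ n _ n])
  also have "\<dots> = A ^\<^sub>m Suc k * A" using Suc by simp
  finally show ?case .
qed

lemma mev_monom: assumes A: "A \<in> carrier_mat n n"
  shows "mev (monom a k) A = a \<cdot>\<^sub>m (A ^\<^sub>m k)"
proof (induct k)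
  case 0 then show ?case using A by (simp add: monom_0 mev_const[OF A])
next
  case (Suc k)
  have "mev (monom a (Suc k)) A = A * (a \<cdot>\<^sub>m (A ^\<^sub>m k))" using Suc by (simp add: monom_Suc mev_pCons0[OF A])
  also have "\<dots> = a \<cdot>\<^sub>m (A * A ^\<^sub>m k)" using A by (simp add: mult_smult_distrib[of _ n n _ n])
  also have "\<dots> = a \<cdot>\<^sub>m (A ^\<^sub>m Suc k)" using pow_comm[OF A] by simp
  finally show ?case .
qed

lemma mev_sum_monom: assumes A: "A \<in> carrier_mat n n"
  shows "mev (\<Sum>k<K. monom (f k) k) A = mat n n (\<lambda>(i,j). \<Sum>k<K. f k * (A ^\<^sub>m k) $$ (i,j))"
proof (induct K)
  case 0 then show ?case using A by (auto intro!: eq_matI)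
next
  case (Suc K)
  show ?case using Suc A by (auto intro!: eq_matI simp: mev_add[OF A] mev_monom[OF A])
qed

lemma zero_row_det: assumes M: "(M :: 'a :: idom mat) \<in> carrier_mat k k" and i: "i < k"
  and z: "\<And>j. j < k \<Longrightarrow> M $$ (i,j) = 0"
  shows "det M = 0"
proof -
  have MT: "transpose_mat M \<in> carrier_mat k k" using M by simp
  have "transpose_mat M *\<^sub>v unit_vec k i = 0\<^sub>v k"
    using M i z by (intro eq_vecI) (auto simp: scalar_prod_right_unit)
  moreover have "unit_vec k i \<noteq> (0\<^sub>v k :: 'a vec)"
    using i by (metis index_unit_vec(1) index_zero_vec(1) one_neq_zero)
  moreover have "unit_vec k i \<in> carrier_vec k" by simp
  ultimately have "det (transpose_mat M) = 0" using det_0_iff_vec_prod_zero[OF MT] by blast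
  then show ?thesis using det_transpose[OF M] by simp
qed

lemma annihilator: assumes A: "(A :: rat mat) \<in> carrier_mat n n"
  shows "\<exists>p. p \<noteq> 0 \<and> mev p A = 0\<^sub>m n n"
proof -
  define M where "M = Suc (n*n)"
  define W where "W = mat M M (\<lambda>(r,k). if r < n*n then (A ^\<^sub>m k) $$ (r div n, r mod n) else 0)"
  have W: "W \<in> carrier_mat M M" unfolding W_def by simp
  have "det W = 0" by (rule zero_row_det[OF W, of "n*n"]) (auto simp: M_def W_def)
  then obtain c where c: "c \<in> carrier_vec M" "c \<noteq> 0\<^sub>v M" "W *\<^sub>v c = 0\<^sub>v M"
    using det_0_iff_vec_prod_zero[OF W] by auto
  define p where "p = (\<Sum>k<M. monom (c $ k) k)"
  have coeffp: "coeff p k = c $ k" if "k < M" for k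
    using that unfolding p_def by (simp add: coeff_sum coeff_monom)
  have "\<exists>k<M. c $ k \<noteq> 0"
  proof (rule ccontr)
    assume "\<not> ?thesis"
    then have "c = 0\<^sub>v M" using c(1) by (intro eq_vecI) auto
    then show False using c(2) by simp
  qed
  then obtain k where k: "k < M" "c $ k \<noteq> 0" by blast
  have "p \<noteq> 0" using coeffp[OF k(1)] k(2) by auto
  moreover have "mev p A = 0\<^sub>m n n"
  proof -
    have "mev p A = mat n n (\<lambda>(i,j). \<Sum>k<M. c $ k * (A ^\<^sub>m k) $$ (i,j))"
      unfolding p_def by (rule mev_sum_monom[OF A])
    also have "\<dots> = 0\<^sub>m n n"
    proof (intro eq_matI)
      fix i j assume ij: "i < dim_row (0\<^sub>m n n :: rat mat)" "j < dim_col (0\<^sub>m n n :: rat mat)"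
      then have i: "i < n" and j: "j < n" by auto
      have "i * n + j < i * n + n" using j by simp
      also have "\<dots> = Suc i * n" by simp
      also have "\<dots> \<le> n * n" using i by (intro mult_le_mono1) simp
      finally have r: "i * n + j < n * n" .
      have dm: "(i * n + j) div n = i" "(i * n + j) mod n = j" using j by auto
      have "(W *\<^sub>v c) $ (i * n + j) = (\<Sum>k\<in>{0..<M}. W $$ (i * n + j, k) * c $ k)"
        using W c(1) r unfolding M_def by (simp add: scalar_prod_def)
      also have "\<dots> = (\<Sum>k<M. c $ k * (A ^\<^sub>m k) $$ (i,j))"
        unfolding lessThan_atLeast0 using r j unfolding W_def M_def by (intro sum.cong) (auto simp: dm)
      finally have "(\<Sum>k<M. c $ k * (A ^\<^sub>m k) $$ (i,j)) = (W *\<^sub>v c) $ (i * n + j)" by simp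
      also have "\<dots> = 0" using c(3) r unfolding M_def by simp
      finally show "mat n n (\<lambda>(i,j). \<Sum>k<M. c $ k * (A ^\<^sub>m k) $$ (i,j)) $$ (i, j) = 0\<^sub>m n n $$ (i, j)"
        using i j by simp
    qed auto
    finally show ?thesis .
  qed
  ultimately show ?thesis by blast
qed

lemma poly_factor: fixes p r :: "rat poly" assumes "p \<noteq> 0"
  shows "\<exists>f g. p = f * g \<and> f dvd r ^ degree p \<and> coprime g r"
  using assms
proof (induct "degree p" arbitrary: p rule: less_induct)
  case less
  show ?case
  proof (cases "coprime p r")
    case True then show ?thesis by (intro exI[of _ 1] exI[of _ p]) auto
  next
    case False
    define d where "d = gcd p r"
    have dp: "d dvd p" unfolding d_def by simp
    then obtain p' where p': "p = d * p'" by (auto elim: dvdE)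
    have d0: "d \<noteq> 0" and p'0: "p' \<noteq> 0" using p' less.prems by auto
    have "\<not> is_unit d" unfolding d_def is_unit_gcd using False .
    then have "degree d > 0" using is_unit_iff_degree[OF d0] d0 by auto
    moreover have dg: "degree p = degree d + degree p'" using p' d0 p'0 by (simp add: degree_mult_eq)
    ultimately have "degree p' < degree p" by simp
    from less.hyps[OF this p'0] obtain f' g where fg: "p' = f' * g" "f' dvd r ^ degree p'" "coprime g r" by blast
    have "d * f' dvd r * r ^ degree p'" using fg(2) unfolding d_def by (intro mult_dvd_mono) auto
    also have "\<dots> = r ^ Suc (degree p')" by simp
    also have "\<dots> dvd r ^ degree p" using dg \<open>degree d > 0\<close> by (intro le_imp_power_dvd) simp
    finally show ?thesis using p' fg by (intro exI[of _ "d * f'"] exI[of _ g]) (auto simp: mult.assoc)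
  qed
qed

lemma clear_denom: assumes y: "(y :: rat vec) \<in> carrier_vec n"
  shows "\<exists>c::int. c > 0 \<and> (\<exists>z\<in>carrier_vec n. map_vec of_int z = of_int c \<cdot>\<^sub>v y)"
proof -
  define b where "b i = snd (quotient_of (y $ i))" for i
  have bpos: "b i > 0" for i unfolding b_def using quotient_of_denom_pos by (metis prod.collapse)
  have bint: "of_int (b i) * y $ i \<in> \<int>" for i
  proof -
    obtain a bb where q: "quotient_of (y $ i) = (a, bb)" by (cases "quotient_of (y $ i)")
    then have "y $ i = of_int a / of_int bb" by (simp add: quotient_of_div)
    moreover have "bb > 0" using q quotient_of_denom_pos by blast
    ultimately show ?thesis unfolding b_def q by simp
  qed
  define c where "c = (\<Prod>i<n. b i)"
  have cpos: "c > 0" unfolding c_def using bpos by (simp add: prod_pos)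
  have cint: "of_int c * y $ i \<in> \<int>" if i: "i < n" for i
  proof -
    have "c = b i * (\<Prod>j\<in>{..<n} - {i}. b j)" unfolding c_def using i by (simp add: prod.remove)
    then have "of_int c * y $ i = (of_int (b i) * y $ i) * of_int (\<Prod>j\<in>{..<n} - {i}. b j)" by simp
    also have "\<dots> \<in> \<int>" by (rule Ints_mult[OF bint Ints_of_int])
    finally show ?thesis .
  qed
  define z where "z = vec n (\<lambda>i. \<lfloor>of_int c * y $ i\<rfloor>)"
  have "map_vec of_int z = of_int c \<cdot>\<^sub>v y"
    using y cint unfolding z_def by (intro eq_vecI) auto
  then show ?thesis using cpos unfolding z_def by (intro exI[of _ c]) auto
qed


lemma prod_powi: "(\<Prod>j\<in>S. f j) powi m = (\<Prod>j\<in>S. (f j :: 'a :: field) powi m)"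
  by (induct S rule: infinite_finite_induct) (auto simp: power_int_mult_distrib)

lemma powi_sum: assumes "(x :: 'a :: field) \<noteq> 0"
  shows "x powi (\<Sum>j\<in>S. a j) = (\<Prod>j\<in>S. x powi a j)"
  using assms by (induct S rule: infinite_finite_induct) (auto simp: power_int_add)

lemma phi_index: "i < dim_row M \<Longrightarrow> phi M u $ i = (\<Prod>j<dim_col M. (u $ j) powi (M $$ (i, j)))"
  by (simp add: phi_def)

lemma phi_dim[simp]: "dim_vec (phi M u) = dim_row M" by (simp add: phi_def)

lemma phi_mult: assumes M: "M \<in> carrier_mat k m" and N: "N \<in> carrier_mat m n"
  and u: "u \<in> carrier_vec n" and u0: "\<forall>i<n. (u $ i :: 'a :: field) \<noteq> 0"
  shows "phi M (phi N u) = phi (M * N) u"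
proof (intro eq_vecI)
  fix i assume "i < dim_vec (phi (M * N) u)"
  then have i: "i < k" using M by simp
  have "phi M (phi N u) $ i = (\<Prod>j<m. (\<Prod>l<n. (u $ l) powi (N $$ (j, l))) powi (M $$ (i, j)))"
    using M N i by (simp add: phi_index)
  also have "\<dots> = (\<Prod>j<m. \<Prod>l<n. (u $ l) powi (N $$ (j, l) * M $$ (i, j)))"
    by (simp add: prod_powi power_int_mult)
  also have "\<dots> = (\<Prod>l<n. \<Prod>j<m. (u $ l) powi (M $$ (i, j) * N $$ (j, l)))"
    by (subst prod.swap) (simp add: mult.commute)
  also have "\<dots> = (\<Prod>l<n. (u $ l) powi (\<Sum>j<m. M $$ (i, j) * N $$ (j, l)))"
    using u0 by (intro prod.cong refl, subst powi_sum) auto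
  also have "\<dots> = phi (M * N) u $ i"
    using M N i by (simp add: phi_index scalar_prod_def lessThan_atLeast0)
  finally show "phi M (phi N u) $ i = phi (M * N) u $ i" .
qed (use M in simp)

definition pcat :: "'a mat \<Rightarrow> 'a mat \<Rightarrow> 'a mat" where
  "pcat B1 B2 = mat (dim_row B1) (dim_col B1 + dim_col B2)
     (\<lambda>(i,j). if j < dim_col B1 then B1 $$ (i,j) else B2 $$ (i, j - dim_col B1))"

definition bdiag :: "'a::zero mat \<Rightarrow> 'a mat \<Rightarrow> 'a mat" where
  "bdiag A1 A2 = mat (dim_row A1 + dim_row A2) (dim_row A1 + dim_row A2)
     (\<lambda>(i,j). if i < dim_row A1 then (if j < dim_row A1 then A1 $$ (i,j) else 0)
              else (if j < dim_row A1 then 0 else A2 $$ (i - dim_row A1, j - dim_row A1)))"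

lemma pcat_carrier[simp]: "B1 \<in> carrier_mat n d1 \<Longrightarrow> B2 \<in> carrier_mat n d2 \<Longrightarrow> pcat B1 B2 \<in> carrier_mat n (d1 + d2)"
  unfolding pcat_def by auto

lemma bdiag_carrier[simp]: "A1 \<in> carrier_mat d1 d1 \<Longrightarrow> A2 \<in> carrier_mat d2 d2 \<Longrightarrow> bdiag A1 A2 \<in> carrier_mat (d1 + d2) (d1 + d2)"
  unfolding bdiag_def by auto

lemma row_pcat: assumes "B1 \<in> carrier_mat n d1" "B2 \<in> carrier_mat n d2" "i < n"
  shows "row (pcat B1 B2) i = row B1 i @\<^sub>v row B2 i"
  using assms unfolding pcat_def by (intro eq_vecI) auto

lemma col_pcat: assumes "B1 \<in> carrier_mat n d1" "B2 \<in> carrier_mat n d2" "j < d1 + d2"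
  shows "col (pcat B1 B2) j = (if j < d1 then col B1 j else col B2 (j - d1))"
  using assms unfolding pcat_def by (intro eq_vecI) auto

lemma col_bdiag: assumes "A1 \<in> carrier_mat d1 d1" "A2 \<in> carrier_mat d2 d2" "j < d1 + d2"
  shows "col (bdiag A1 A2) j = (if j < d1 then col A1 j @\<^sub>v 0\<^sub>v d2 else 0\<^sub>v d1 @\<^sub>v col A2 (j - d1))"
  using assms unfolding bdiag_def by (intro eq_vecI) auto

lemma pcat_mult_vec: assumes B1: "(B1 :: 'a :: comm_ring_1 mat) \<in> carrier_mat n d1" and B2: "B2 \<in> carrier_mat n d2"
  and y1: "y1 \<in> carrier_vec d1" and y2: "y2 \<in> carrier_vec d2"
  shows "pcat B1 B2 *\<^sub>v (y1 @\<^sub>v y2) = B1 *\<^sub>v y1 + B2 *\<^sub>v y2"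
proof (intro eq_vecI)
  fix i assume "i < dim_vec (B1 *\<^sub>v y1 + B2 *\<^sub>v y2)"
  then have i: "i < n" using B2 by simp
  have "(pcat B1 B2 *\<^sub>v (y1 @\<^sub>v y2)) $ i = row (pcat B1 B2) i \<bullet> (y1 @\<^sub>v y2)"
    using B1 B2 i by (intro index_mult_mat_vec) (simp add: pcat_def)
  also have "\<dots> = (row B1 i @\<^sub>v row B2 i) \<bullet> (y1 @\<^sub>v y2)"
    using B1 B2 i by (simp add: row_pcat)
  also have "\<dots> = row B1 i \<bullet> y1 + row B2 i \<bullet> y2"
    using B1 B2 y1 y2 by (intro scalar_prod_append) auto
  finally show "(pcat B1 B2 *\<^sub>v (y1 @\<^sub>v y2)) $ i = (B1 *\<^sub>v y1 + B2 *\<^sub>v y2) $ i"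
    using B1 B2 i by simp
qed (use B1 B2 in \<open>simp add: pcat_def\<close>)

lemma map_pcat: "B1 \<in> carrier_mat n d1 \<Longrightarrow> B2 \<in> carrier_mat n d2 \<Longrightarrow>
  map_mat h (pcat B1 B2) = pcat (map_mat h B1) (map_mat h B2)"
  unfolding pcat_def by (intro eq_matI) auto

lemma mult_pcat: assumes A: "(A :: 'a :: comm_ring_1 mat) \<in> carrier_mat n n" and B1: "B1 \<in> carrier_mat n d1" and B2: "B2 \<in> carrier_mat n d2"
  shows "A * pcat B1 B2 = pcat (A * B1) (A * B2)"
proof (intro eq_matI)
  fix i j assume "i < dim_row (pcat (A * B1) (A * B2))" "j < dim_col (pcat (A * B1) (A * B2))"
  then have i: "i < n" and j: "j < d1 + d2" using A B1 B2 by (auto simp: pcat_def)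
  have "(A * pcat B1 B2) $$ (i, j) = row A i \<bullet> col (pcat B1 B2) j"
    using A B1 B2 i j by (intro index_mult_mat) (auto simp: pcat_def)
  also have "\<dots> = pcat (A * B1) (A * B2) $$ (i, j)"
    unfolding col_pcat[OF B1 B2 j] using A B1 B2 i j by (simp add: pcat_def)
  finally show "(A * pcat B1 B2) $$ (i, j) = pcat (A * B1) (A * B2) $$ (i, j)" .
qed (use A B1 B2 in \<open>auto simp: pcat_def\<close>)

lemma pcat_mult_bdiag: assumes B1: "(B1 :: 'a :: comm_ring_1 mat) \<in> carrier_mat n d1" and B2: "B2 \<in> carrier_mat n d2"
  and A1: "A1 \<in> carrier_mat d1 d1" and A2: "A2 \<in> carrier_mat d2 d2"
  shows "pcat B1 B2 * bdiag A1 A2 = pcat (B1 * A1) (B2 * A2)"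
proof (intro eq_matI)
  fix i j assume "i < dim_row (pcat (B1 * A1) (B2 * A2))" "j < dim_col (pcat (B1 * A1) (B2 * A2))"
  then have i: "i < n" and j: "j < d1 + d2" using A1 A2 B1 B2 by (auto simp: pcat_def)
  have "(pcat B1 B2 * bdiag A1 A2) $$ (i, j) = row (pcat B1 B2) i \<bullet> col (bdiag A1 A2) j"
    using B1 B2 A1 A2 i j by (intro index_mult_mat) (auto simp: pcat_def bdiag_def)
  also have "\<dots> = (row B1 i @\<^sub>v row B2 i) \<bullet> col (bdiag A1 A2) j"
    using B1 B2 A1 A2 i j by (simp add: row_pcat)
  also have "\<dots> = (if j < d1 then row B1 i \<bullet> col A1 j else row B2 i \<bullet> col A2 (j - d1))"
    using B1 B2 A1 A2 i j by (auto simp: col_bdiag scalar_prod_append[of _ d1 _ d2])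
  also have "\<dots> = pcat (B1 * A1) (B2 * A2) $$ (i, j)"
    using B1 B2 A1 A2 i j by (simp add: pcat_def)
  finally show "(pcat B1 B2 * bdiag A1 A2) $$ (i, j) = pcat (B1 * A1) (B2 * A2) $$ (i, j)" .
qed (use A1 A2 B1 B2 in \<open>auto simp: pcat_def bdiag_def\<close>)

lemma phi_bdiag: assumes A1: "A1 \<in> carrier_mat d1 d1" and A2: "A2 \<in> carrier_mat d2 d2"
  and u: "(u :: 'a :: field vec) \<in> carrier_vec (d1 + d2)"
  shows "phi A1 (vec_first u d1) @\<^sub>v phi A2 (vec_last u d2) = phi (bdiag A1 A2) u"
proof (intro eq_vecI)
  fix i assume "i < dim_vec (phi (bdiag A1 A2) u)"
  then have i: "i < d1 + d2" using A1 A2 by (simp add: bdiag_def)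
  have D: "dim_row (bdiag A1 A2) = d1 + d2" "dim_col (bdiag A1 A2) = d1 + d2" using A1 A2 by (auto simp: bdiag_def)
  show "(phi A1 (vec_first u d1) @\<^sub>v phi A2 (vec_last u d2)) $ i = phi (bdiag A1 A2) u $ i"
  proof (cases "i < d1")
    case True
    have "phi (bdiag A1 A2) u $ i = (\<Prod>j<d1 + d2. (u $ j) powi (bdiag A1 A2 $$ (i, j)))"
      using i D by (simp add: phi_index)
    also have "\<dots> = (\<Prod>j<d1. (u $ j) powi (bdiag A1 A2 $$ (i, j)))"
      using i A1 A2 True by (intro prod.mono_neutral_right) (auto simp: bdiag_def)
    also have "\<dots> = phi A1 (vec_first u d1) $ i"
      using A1 A2 True by (simp add: phi_index bdiag_def vec_first_def)
    finally show ?thesis using A1 A2 True by simp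
  next
    case False
    have "phi (bdiag A1 A2) u $ i = (\<Prod>j<d1 + d2. (u $ j) powi (bdiag A1 A2 $$ (i, j)))"
      using i D by (simp add: phi_index)
    also have "\<dots> = (\<Prod>j\<in>{d1..<d1 + d2}. (u $ j) powi (bdiag A1 A2 $$ (i, j)))"
      using i A1 A2 False by (intro prod.mono_neutral_right) (auto simp: bdiag_def)
    also have "\<dots> = (\<Prod>j<d2. (u $ (j + d1)) powi (bdiag A1 A2 $$ (i, j + d1)))"
      using prod.shift_bounds_nat_ivl[of _ 0 d1 d2] by (simp add: lessThan_atLeast0 add.commute)
    also have "\<dots> = phi A2 (vec_last u d2) $ (i - d1)"
      using A1 A2 False i u by (simp add: phi_index bdiag_def vec_last_def add.commute)
    finally show ?thesis using A1 A2 False i by simp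
  qed
qed (use A1 A2 in \<open>simp add: bdiag_def\<close>)


lemma map_vec_of_int_add: "x \<in> carrier_vec n \<Longrightarrow> y \<in> carrier_vec n \<Longrightarrow>
  map_vec (of_int :: int \<Rightarrow> 'a :: ring_1) (x + y) = map_vec of_int x + map_vec of_int y"
  by (intro eq_vecI) auto

lemma map_vec_of_int_smult: "map_vec (of_int :: int \<Rightarrow> 'a :: ring_1) (c \<cdot>\<^sub>v x) = of_int c \<cdot>\<^sub>v map_vec of_int x"
  by (intro eq_vecI) auto

lemma mult_mat_vec_smult: assumes A: "(A :: 'a :: comm_ring_1 mat) \<in> carrier_mat nr nc" and v: "v \<in> carrier_vec nc"
  shows "A *\<^sub>v (k \<cdot>\<^sub>v v) = k \<cdot>\<^sub>v (A *\<^sub>v v)"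
  using A v by (intro eq_vecI) (auto simp: scalar_prod_def sum_distrib_left mult.left_commute)

lemma smult_vec_zero_imp: assumes v: "v \<in> carrier_vec n" "v \<noteq> 0\<^sub>v n" and c: "(c :: 'a :: idom) \<cdot>\<^sub>v v = 0\<^sub>v n"
  shows "c = 0"
proof -
  obtain i where i: "i < n" "v $ i \<noteq> 0"
  proof (rule ccontr)
    assume "\<not> thesis"
    then have "\<forall>i<n. v $ i = 0" using that by blast
    then have "v = 0\<^sub>v n" using v(1) by (intro eq_vecI) auto
    then show False using v(2) by simp
  qed
  have "c * v $ i = 0" using arg_cong[OF c, of "\<lambda>w. w $ i"] i v by simp
  then show ?thesis using i by simp
qed

lemma self_scalar_zero: assumes z: "(z :: int vec) \<in> carrier_vec n" and zz: "z \<bullet> z = 0"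
  shows "z = 0\<^sub>v n"
proof (intro eq_vecI)
  fix i assume i: "i < dim_vec (0\<^sub>v n :: int vec)"
  have "(\<Sum>j\<in>{0..<n}. z $ j * z $ j) = 0" using zz z by (simp add: scalar_prod_def)
  then have "\<forall>j\<in>{0..<n}. z $ j * z $ j = 0" by (subst (asm) sum_nonneg_eq_0_iff) auto
  then show "z $ i = 0\<^sub>v n $ i" using i by simp
qed (use z in simp)

lemma int_inj_rat: assumes B: "(B :: int mat) \<in> carrier_mat n d"
  and inj: "\<forall>y\<in>carrier_vec d. B *\<^sub>v y = 0\<^sub>v n \<longrightarrow> y = 0\<^sub>v d"
  and y: "(y :: rat vec) \<in> carrier_vec d" and By: "map_mat of_int B *\<^sub>v y = 0\<^sub>v n"
  shows "y = 0\<^sub>v d"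
proof -
  obtain c z where c: "c > 0" and z: "z \<in> carrier_vec d" and cz: "map_vec of_int z = of_int c \<cdot>\<^sub>v y"
    using clear_denom[OF y] by auto
  have "map_vec (of_int :: int \<Rightarrow> rat) (B *\<^sub>v z) = map_mat of_int B *\<^sub>v map_vec of_int z"
    using B z by (rule of_int_hom.mult_mat_vec_hom)
  also have "\<dots> = of_int c \<cdot>\<^sub>v (map_mat of_int B *\<^sub>v y)" unfolding cz using B y by (simp add: mult_mat_vec)
  also have "\<dots> = map_vec of_int (0\<^sub>v n)" using By by auto
  finally have "B *\<^sub>v z = 0\<^sub>v n" by (rule of_int_hom.vec_hom_inj)
  then have "z = 0\<^sub>v d" using inj z by auto
  then have "of_int c \<cdot>\<^sub>v y = 0\<^sub>v d" using cz by (metis of_int_hom.vec_hom_zero)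
  show ?thesis
  proof (intro eq_vecI)
    fix i assume i: "i < dim_vec (0\<^sub>v d :: rat vec)"
    have "(of_int c \<cdot>\<^sub>v y) $ i = 0" using \<open>of_int c \<cdot>\<^sub>v y = 0\<^sub>v d\<close> i by simp
    then show "y $ i = 0\<^sub>v d $ i" using c y i by simp
  qed (use y in simp)
qed

lemma lattice_action: assumes A: "(A :: int mat) \<in> carrier_mat n n" and B: "B \<in> carrier_mat n d"
  and colB: "\<forall>j<d. col B j \<in> L" and span: "\<forall>x\<in>L. \<exists>y\<in>carrier_vec d. x = B *\<^sub>v y"
  and inv: "\<And>x. x \<in> L \<Longrightarrow> A *\<^sub>v x \<in> L"
  shows "\<exists>A1. A1 \<in> carrier_mat d d \<and> A * B = B * A1"
proof -
  have "\<forall>j. \<exists>y. j < d \<longrightarrow> y \<in> carrier_vec d \<and> A *\<^sub>v col B j = B *\<^sub>v y"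
    using colB span inv by blast
  then obtain Y where Y: "\<And>j. j < d \<Longrightarrow> Y j \<in> carrier_vec d \<and> A *\<^sub>v col B j = B *\<^sub>v Y j" by metis
  define A1 where "A1 = mat d d (\<lambda>(i,j). Y j $ i)"
  have colA1: "col A1 j = Y j" if "j < d" for j
    using Y[OF that] that unfolding A1_def by (intro eq_vecI) auto
  have "A * B = B * A1"
  proof (intro eq_matI)
    fix i j assume "i < dim_row (B * A1)" "j < dim_col (B * A1)"
    then have i: "i < n" and j: "j < d" using B by (auto simp: A1_def)
    have "(A * B) $$ (i,j) = (A *\<^sub>v col B j) $ i" using A B i j by simp
    also have "\<dots> = (B *\<^sub>v Y j) $ i" using Y[OF j] by simp
    also have "\<dots> = (B * A1) $$ (i,j)" using B i j colA1[OF j] by (simp add: A1_def)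
    finally show "(A * B) $$ (i,j) = (B * A1) $$ (i,j)" .
  qed (use A B in \<open>auto simp: A1_def\<close>)
  then show ?thesis by (intro exI[of _ A1]) (auto simp: A1_def)
qed


lemma mev_zero_dvd: assumes A: "A \<in> carrier_mat n n" and pA: "mev p A = 0\<^sub>m n n" and d: "p dvd q"
  shows "mev q A = 0\<^sub>m n n"
proof -
  obtain t where "q = p * t" using d by (auto elim: dvdE)
  then have "mev q A = 0\<^sub>m n n * mev t A" using pA by (simp add: mev_mult[OF A])
  also have "\<dots> = 0\<^sub>m n n" using A by simp
  finally show ?thesis .
qed

lemma mat_mult_zero_vec: "M \<in> carrier_mat n m \<Longrightarrow> N \<in> carrier_mat m k \<Longrightarrow> M * N = 0\<^sub>m n k \<Longrightarrow>
  x \<in> carrier_vec k \<Longrightarrow> M *\<^sub>v (N *\<^sub>v x) = 0\<^sub>v n"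
proof -
  assume M: "M \<in> carrier_mat n m" and N: "N \<in> carrier_mat m k" and MN: "M * N = 0\<^sub>m n k" and x: "x \<in> carrier_vec k"
  have "M *\<^sub>v (N *\<^sub>v x) = (M * N) *\<^sub>v x" using M N x by simp
  also have "\<dots> = 0\<^sub>v n" unfolding MN using x by (intro eq_vecI) (auto simp: scalar_prod_def)
  finally show ?thesis .
qed

lemma ker_mult_zero: assumes F: "(F :: rat mat) \<in> carrier_mat n n" and B: "(B :: int mat) \<in> carrier_mat n d"
  and col: "\<forall>j<d. F *\<^sub>v map_vec of_int (col B j) = 0\<^sub>v n"
  shows "F * map_mat of_int B = 0\<^sub>m n d"
proof (intro eq_matI)
  fix i j assume "i < dim_row (0\<^sub>m n d :: rat mat)" "j < dim_col (0\<^sub>m n d :: rat mat)"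
  then have i: "i < n" and j: "j < d" by auto
  have e: "col (map_mat of_int B) j = map_vec of_int (col B j)" using B j by (intro eq_vecI) auto
  have "(F * map_mat of_int B) $$ (i,j) = (F *\<^sub>v map_vec of_int (col B j)) $ i"
  proof -
    have "(F * map_mat of_int B) $$ (i,j) = row F i \<bullet> col (map_mat of_int B) j"
      using F B i j by (intro index_mult_mat(1)) auto
    also have "\<dots> = (F *\<^sub>v col (map_mat of_int B) j) $ i"
      using F i by (intro index_mult_mat_vec[symmetric]) auto
    also have "\<dots> = (F *\<^sub>v map_vec of_int (col B j)) $ i" by (simp only: e)
    finally show ?thesis .
  qed
  then show "(F * map_mat of_int B) $$ (i,j) = 0\<^sub>m n d $$ (i,j)" using col i j by simp
qed (use F B in auto)

lemma zero_by_inj: assumes B: "(B :: int mat) \<in> carrier_mat n d"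
  and inj: "\<forall>y\<in>carrier_vec d. B *\<^sub>v y = 0\<^sub>v n \<longrightarrow> y = 0\<^sub>v d"
  and M: "(M :: rat mat) \<in> carrier_mat d d" and BM: "map_mat of_int B * M = 0\<^sub>m n d"
  shows "M = 0\<^sub>m d d"
proof (intro eq_matI)
  fix i j assume "i < dim_row (0\<^sub>m d d :: rat mat)" "j < dim_col (0\<^sub>m d d :: rat mat)"
  then have i: "i < d" and j: "j < d" by auto
  have BQ: "map_mat of_int B \<in> carrier_mat n d" using B by simp
  have "map_mat of_int B *\<^sub>v col M j = col (map_mat of_int B * M) j" by (rule col_mult2[symmetric, OF BQ M j])
  also have "\<dots> = 0\<^sub>v n" unfolding BM using j by (intro eq_vecI) auto
  finally have "map_mat of_int B *\<^sub>v col M j = 0\<^sub>v n" .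
  moreover have "col M j \<in> carrier_vec d" using M by (intro carrier_vecI) simp
  ultimately have "col M j = 0\<^sub>v d" by (intro int_inj_rat[OF B inj])
  moreover have "M $$ (i,j) = col M j $ i" using M i j by simp
  ultimately show "M $$ (i,j) = 0\<^sub>m d d $$ (i,j)" using i j by simp
qed (use M in auto)


interpretation mpr: map_poly_comm_ring_hom "of_rat :: rat \<Rightarrow> complex" by unfold_locales

lemma poly_map_r: "poly (map_poly (of_rat :: rat \<Rightarrow> complex) ((monom 1 N - 1) ^ K)) z = (z ^ N - 1) ^ K"
  by (simp add: mpr.hom_power mpr.hom_minus poly_monom)

lemma eig_obtain: assumes "int_eigenvalue B z" "B \<in> carrier_mat d d"
  obtains x where "x \<in> carrier_vec d" "x \<noteq> 0\<^sub>v d" "map_mat complex_of_int B *\<^sub>v x = z \<cdot>\<^sub>v x"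
  using assms unfolding int_eigenvalue_def eigenvalue_def eigenvector_def by auto

lemma mev_poly_zero: assumes B: "(B :: rat mat) \<in> carrier_mat d d" and M: "mev q B = 0\<^sub>m d d"
  and x: "(x :: complex vec) \<in> carrier_vec d" "x \<noteq> 0\<^sub>v d" and Bx: "map_mat of_rat B *\<^sub>v x = z \<cdot>\<^sub>v x"
  shows "poly (map_poly of_rat q) z = 0"
proof -
  have BC: "map_mat (of_rat :: rat \<Rightarrow> complex) B \<in> carrier_mat d d" using B by simp
  have "mev (map_poly of_rat q) (map_mat of_rat B) = map_mat (of_rat :: rat \<Rightarrow> complex) (mev q B)" by (rule mev_hom[OF B, symmetric])
  also have "\<dots> = 0\<^sub>m d d" unfolding M by (intro eq_matI) auto
  finally have "mev (map_poly of_rat q) (map_mat of_rat B) *\<^sub>v x = 0\<^sub>v d" using x by (intro eq_vecI) auto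
  then have "poly (map_poly of_rat q) z \<cdot>\<^sub>v x = 0\<^sub>v d" using mev_eigen[OF BC x(1) Bx] by simp
  then show ?thesis by (rule smult_vec_zero_imp[OF x(1,2)])
qed

lemma mat_vec_zero: "M \<in> carrier_mat n k \<Longrightarrow> M *\<^sub>v 0\<^sub>v k = 0\<^sub>v n"
  by (intro eq_vecI) auto

lemma ker_block: assumes A: "(A :: int mat) \<in> carrier_mat n n" and M: "(M :: rat mat) \<in> carrier_mat n n"
  and comm: "M * map_mat of_int A = map_mat of_int A * M"
  shows "\<exists>d B A1. B \<in> carrier_mat n d \<and> A1 \<in> carrier_mat d d \<and> A * B = B * A1 \<and>
    (\<forall>j<d. M *\<^sub>v map_vec of_int (col B j) = 0\<^sub>v n) \<and>
    (\<forall>y\<in>carrier_vec d. B *\<^sub>v y = 0\<^sub>v n \<longrightarrow> y = 0\<^sub>v d) \<and>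
    (\<forall>x\<in>carrier_vec n. M *\<^sub>v map_vec of_int x = 0\<^sub>v n \<longrightarrow> (\<exists>y\<in>carrier_vec d. x = B *\<^sub>v y))"
proof -
  define L where "L = {x \<in> carrier_vec n. M *\<^sub>v map_vec of_int x = 0\<^sub>v n}"
  have "\<exists>d B. B \<in> carrier_mat n d \<and> (\<forall>j<d. col B j \<in> L) \<and>
     (\<forall>y\<in>carrier_vec d. B *\<^sub>v y = 0\<^sub>v n \<longrightarrow> y = 0\<^sub>v d) \<and> (\<forall>x\<in>L. \<exists>y\<in>carrier_vec d. x = B *\<^sub>v y)"
  proof (rule lattice)
    show "L \<subseteq> carrier_vec n" unfolding L_def by auto
    show "0\<^sub>v n \<in> L" unfolding L_def using M by (auto intro!: eq_vecI simp: of_int_hom.vec_hom_zero)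
    show "x + y \<in> L" if "x \<in> L" "y \<in> L" for x y
      using that M unfolding L_def by (auto simp: map_vec_of_int_add mult_add_distrib_mat_vec[of _ n n])
    show "c \<cdot>\<^sub>v x \<in> L" if "x \<in> L" for c x
      using that M unfolding L_def by (auto simp: map_vec_of_int_smult mult_mat_vec[of _ n n])
  qed
  then obtain d B where B: "B \<in> carrier_mat n d" and colB: "\<forall>j<d. col B j \<in> L"
    and inj: "\<forall>y\<in>carrier_vec d. B *\<^sub>v y = 0\<^sub>v n \<longrightarrow> y = 0\<^sub>v d"
    and span: "\<forall>x\<in>L. \<exists>y\<in>carrier_vec d. x = B *\<^sub>v y" by blast
  have inv: "A *\<^sub>v x \<in> L" if x: "x \<in> L" for x
  proof -
    have xc: "x \<in> carrier_vec n" and Mx: "M *\<^sub>v map_vec of_int x = 0\<^sub>v n" using x unfolding L_def by auto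
    have AQ: "map_mat (of_int :: int \<Rightarrow> rat) A \<in> carrier_mat n n" using A by simp
    have "M *\<^sub>v map_vec of_int (A *\<^sub>v x) = M *\<^sub>v (map_mat of_int A *\<^sub>v map_vec of_int x)"
      using A xc by (simp add: of_int_hom.mult_mat_vec_hom[of _ n n])
    also have "\<dots> = (M * map_mat of_int A) *\<^sub>v map_vec of_int x" using M AQ xc by simp
    also have "\<dots> = map_mat of_int A *\<^sub>v (M *\<^sub>v map_vec of_int x)" unfolding comm using M AQ xc by simp
    also have "\<dots> = 0\<^sub>v n" unfolding Mx using AQ by (intro eq_vecI) auto
    finally show ?thesis using A xc unfolding L_def by simp
  qed
  obtain A1 where A1: "A1 \<in> carrier_mat d d" "A * B = B * A1"
    using lattice_action[OF A B colB span inv] by blast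
  show ?thesis
    by (rule exI[of _ d], rule exI[of _ B], rule exI[of _ A1]) (use B A1 colB inj span in \<open>auto simp: L_def\<close>)
qed

theorem decomp:
  fixes A :: "int mat"
  assumes A: "A \<in> carrier_mat n n" and dA: "det A \<noteq> 0"
  shows "\<exists>d1 d2 A1 A2 P. d1 + d2 = n \<and> A1 \<in> carrier_mat d1 d1 \<and> (\<forall>z. int_eigenvalue A1 z \<longrightarrow> root_of_unity z)
    \<and> A2 \<in> carrier_mat d2 d2 \<and> positive_mat A2 \<and> P \<in> carrier_mat n n \<and> det P \<noteq> 0 \<and> A * P = P * bdiag A1 A2"
proof -
  define AQ where "AQ = map_mat (of_int :: int \<Rightarrow> rat) A"
  have AQ: "AQ \<in> carrier_mat n n" using A unfolding AQ_def by simp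
  obtain p where p0: "p \<noteq> 0" and pA: "mev p AQ = 0\<^sub>m n n" using annihilator[OF AQ] by blast
  define AC where "AC = map_mat (of_int :: int \<Rightarrow> complex) A"
  have AC: "AC \<in> carrier_mat n n" using A unfolding AC_def by simp
  define cp where "cp = char_poly AC"
  have cp0: "cp \<noteq> 0" using degree_monic_char_poly[OF AC] unfolding cp_def by auto
  define R where "R = {z. poly cp z = 0 \<and> root_of_unity z}"
  have finR: "finite R" unfolding R_def using poly_roots_finite[OF cp0] by (rule rev_finite_subset) auto
  define ordr where "ordr z = (SOME m::nat. m > 0 \<and> z ^ m = 1)" for z :: complex
  have ordr: "ordr z > 0 \<and> z ^ ordr z = 1" if "root_of_unity z" for z
    using that unfolding ordr_def root_of_unity_def by (rule someI_ex)
  define N where "N = (\<Prod>z\<in>R. ordr z)"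
  have Npos: "N > 0" unfolding N_def using ordr unfolding R_def by (intro prod_pos) auto
  have Nprop: "z ^ N = 1" if "eigenvalue AC z" "root_of_unity z" for z
  proof -
    have "z \<in> R" using that eigenvalue_root_char_poly[OF AC] unfolding R_def cp_def by auto
    then have "ordr z dvd N" unfolding N_def using finR by (intro dvd_prodI)
    then obtain k where "N = ordr z * k" by (auto elim: dvdE)
    then show ?thesis using ordr[OF that(2)] by (simp add: power_mult)
  qed
  define r :: "rat poly" where "r = monom 1 N - 1"
  define K where "K = degree p"
  obtain f g where fg: "p = f * g" "f dvd r ^ K" "coprime g r" using poly_factor[OF p0] unfolding K_def by blast
  obtain h where h: "r ^ K = f * h" using fg(2) by (auto elim: dvdE)
  define F where "F = mev (r ^ K) AQ"
  define G where "G = mev g AQ"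
  have F: "F \<in> carrier_mat n n" and G: "G \<in> carrier_mat n n" unfolding F_def G_def using AQ by auto
  have pdvd1: "p dvd r ^ K * g * t" for t unfolding h fg(1) by (simp add: ac_simps)
  have FG: "F * G = 0\<^sub>m n n" unfolding F_def G_def mev_mult[OF AQ, symmetric]
    by (rule mev_zero_dvd[OF AQ pA]) (metis pdvd1 mult_1_right)
  have GF: "G * F = 0\<^sub>m n n" unfolding F_def G_def mev_mult[OF AQ, symmetric]
    by (rule mev_zero_dvd[OF AQ pA]) (metis pdvd1 mult_1_right mult.commute)
  have "coprime (r ^ K) g" using fg(3) by (simp add: coprime_commute)
  then obtain u v where uv: "u * r ^ K + v * g = 1"
    using bezout_coefficients[of "r ^ K" g] coprime_imp_gcd_eq_1 by (metis prod.collapse)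
  have bez: "mev u AQ * F + mev v AQ * G = 1\<^sub>m n"
    unfolding F_def G_def mev_mult[OF AQ, symmetric] mev_add[OF AQ, symmetric] uv by (rule mev_1[OF AQ])
  have zero_both: "x = 0\<^sub>v n" if x: "x \<in> carrier_vec n" and Fx: "F *\<^sub>v x = 0\<^sub>v n" and Gx: "G *\<^sub>v x = 0\<^sub>v n" for x
  proof -
    have U: "mev u AQ \<in> carrier_mat n n" and V: "mev v AQ \<in> carrier_mat n n" using AQ by auto
    have "x = (mev u AQ * F + mev v AQ * G) *\<^sub>v x" unfolding bez using x by simp
    also have "\<dots> = mev u AQ *\<^sub>v (F *\<^sub>v x) + mev v AQ *\<^sub>v (G *\<^sub>v x)"
      using U V F G x by (simp add: add_mult_distrib_mat_vec[of _ n n])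
    also have "\<dots> = 0\<^sub>v n" unfolding Fx Gx using U V by (intro eq_vecI) auto
    finally show ?thesis .
  qed
  have FA: "F * map_mat of_int A = map_mat of_int A * F" unfolding F_def AQ_def[symmetric]
    using mev_A_comm[OF AQ] by simp
  have GA: "G * map_mat of_int A = map_mat of_int A * G" unfolding G_def AQ_def[symmetric]
    using mev_A_comm[OF AQ] by simp
  obtain d1 B1 A1 where B1: "B1 \<in> carrier_mat n d1" and A1: "A1 \<in> carrier_mat d1 d1"
    and AB1: "A * B1 = B1 * A1" and colB1: "\<forall>j<d1. F *\<^sub>v map_vec of_int (col B1 j) = 0\<^sub>v n"
    and inj1: "\<forall>y\<in>carrier_vec d1. B1 *\<^sub>v y = 0\<^sub>v n \<longrightarrow> y = 0\<^sub>v d1"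
    and span1: "\<forall>x\<in>carrier_vec n. F *\<^sub>v map_vec of_int x = 0\<^sub>v n \<longrightarrow> (\<exists>y\<in>carrier_vec d1. x = B1 *\<^sub>v y)"
    using ker_block[OF A F FA] by blast
  obtain d2 B2 A2 where B2: "B2 \<in> carrier_mat n d2" and A2: "A2 \<in> carrier_mat d2 d2"
    and AB2: "A * B2 = B2 * A2" and colB2: "\<forall>j<d2. G *\<^sub>v map_vec of_int (col B2 j) = 0\<^sub>v n"
    and inj2: "\<forall>y\<in>carrier_vec d2. B2 *\<^sub>v y = 0\<^sub>v n \<longrightarrow> y = 0\<^sub>v d2"
    and span2: "\<forall>x\<in>carrier_vec n. G *\<^sub>v map_vec of_int x = 0\<^sub>v n \<longrightarrow> (\<exists>y\<in>carrier_vec d2. x = B2 *\<^sub>v y)"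
    using ker_block[OF A G GA] by blast
  define B1Q where "B1Q = map_mat (of_int :: int \<Rightarrow> rat) B1"
  define B2Q where "B2Q = map_mat (of_int :: int \<Rightarrow> rat) B2"
  have B1Q: "B1Q \<in> carrier_mat n d1" and B2Q: "B2Q \<in> carrier_mat n d2" using B1 B2 unfolding B1Q_def B2Q_def by auto
  have FB1: "F * B1Q = 0\<^sub>m n d1" unfolding B1Q_def by (rule ker_mult_zero[OF F B1 colB1])
  have GB2: "G * B2Q = 0\<^sub>m n d2" unfolding B2Q_def by (rule ker_mult_zero[OF G B2 colB2])
  define P where "P = pcat B1 B2"
  define m where "m = d1 + d2"
  have P: "P \<in> carrier_mat n m" unfolding P_def m_def using B1 B2 by simp
  have Pinj: "y = 0\<^sub>v m" if y: "y \<in> carrier_vec m" and Py: "P *\<^sub>v y = 0\<^sub>v n" for y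
  proof -
    define y1 where "y1 = vec_first y d1"
    define y2 where "y2 = vec_last y d2"
    have y1: "y1 \<in> carrier_vec d1" and y2: "y2 \<in> carrier_vec d2" unfolding y1_def y2_def by auto
    have ysplit: "y = y1 @\<^sub>v y2" using y unfolding m_def y1_def y2_def by simp
    have sum0: "B1 *\<^sub>v y1 + B2 *\<^sub>v y2 = 0\<^sub>v n"
      using Py unfolding P_def ysplit pcat_mult_vec[OF B1 B2 y1 y2] .
    define z where "z = map_vec (of_int :: int \<Rightarrow> rat) (B1 *\<^sub>v y1)"
    define w where "w = map_vec (of_int :: int \<Rightarrow> rat) (B2 *\<^sub>v y2)"
    have z: "z \<in> carrier_vec n" and w: "w \<in> carrier_vec n" unfolding z_def w_def using B1 B2 y1 y2 by auto
    have zB: "z = B1Q *\<^sub>v map_vec of_int y1" unfolding z_def B1Q_def using B1 y1 by (rule of_int_hom.mult_mat_vec_hom)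
    have wB: "w = B2Q *\<^sub>v map_vec of_int y2" unfolding w_def B2Q_def using B2 y2 by (rule of_int_hom.mult_mat_vec_hom)
    have Fz: "F *\<^sub>v z = 0\<^sub>v n" unfolding zB by (rule mat_mult_zero_vec[OF F B1Q FB1]) (use y1 in simp)
    have Gw: "G *\<^sub>v w = 0\<^sub>v n" unfolding wB by (rule mat_mult_zero_vec[OF G B2Q GB2]) (use y2 in simp)
    have "z + w = map_vec of_int (B1 *\<^sub>v y1 + B2 *\<^sub>v y2)" unfolding z_def w_def
      by (rule map_vec_of_int_add[symmetric, of _ n]) (use B1 B2 y1 y2 in \<open>auto intro: mult_mat_vec_carrier\<close>)
    then have zw: "z + w = 0\<^sub>v n" unfolding sum0 by (simp add: of_int_hom.vec_hom_zero)
    have zmw: "z = (-1) \<cdot>\<^sub>v w"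
    proof (intro eq_vecI)
      fix i assume "i < dim_vec ((-1) \<cdot>\<^sub>v w)"
      then have i: "i < n" using w by simp
      have "(z + w) $ i = 0" using zw i by simp
      then show "z $ i = ((-1) \<cdot>\<^sub>v w) $ i" using i z w by simp
    qed (use z w in simp)
    have Gz: "G *\<^sub>v z = 0\<^sub>v n" unfolding zmw using G w Gw by (simp add: mult_mat_vec[of _ n n]) (intro eq_vecI, auto)
    have z0: "z = 0\<^sub>v n" by (rule zero_both[OF z Fz Gz])
    then have "B1 *\<^sub>v y1 = 0\<^sub>v n" unfolding z_def by simp
    then have y10: "y1 = 0\<^sub>v d1" using inj1 y1 by blast
    then have "B2 *\<^sub>v y2 = 0\<^sub>v n" using sum0 B1 B2 y2 by (simp add: mat_vec_zero)
    then have y20: "y2 = 0\<^sub>v d2" using inj2 y2 by blast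
    show ?thesis unfolding ysplit y10 y20 m_def by (intro eq_vecI) auto
  qed
  have Psurj: "\<exists>c y. c \<noteq> 0 \<and> y \<in> carrier_vec m \<and> P *\<^sub>v y = c \<cdot>\<^sub>v x" if x: "x \<in> carrier_vec n" for x
  proof -
    define xQ where "xQ = map_vec (of_int :: int \<Rightarrow> rat) x"
    have xQ: "xQ \<in> carrier_vec n" unfolding xQ_def using x by simp
    define U where "U = mev u AQ"
    define V where "V = mev v AQ"
    have U: "U \<in> carrier_mat n n" and V: "V \<in> carrier_mat n n" unfolding U_def V_def using AQ by auto
    define a where "a = (U * F) *\<^sub>v xQ"
    define b where "b = (V * G) *\<^sub>v xQ"
    have a: "a \<in> carrier_vec n" and b: "b \<in> carrier_vec n" unfolding a_def b_def using U V F G xQ by auto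
    have xab: "xQ = a + b"
    proof -
      have "xQ = (U * F + V * G) *\<^sub>v xQ" using bez xQ unfolding U_def V_def by simp
      also have "\<dots> = a + b" unfolding a_def b_def using U V F G xQ by (simp add: add_mult_distrib_mat_vec[of _ n n])
      finally show ?thesis .
    qed
    have "G * (U * F) = mev (g * (u * r ^ K)) AQ" unfolding U_def F_def G_def by (simp add: mev_mult[OF AQ])
    also have "\<dots> = 0\<^sub>m n n" by (rule mev_zero_dvd[OF AQ pA]) (metis pdvd1 mult.commute mult.left_commute)
    finally have GUF: "G * (U * F) = 0\<^sub>m n n" .
    have "F * (V * G) = mev (r ^ K * (v * g)) AQ" unfolding V_def F_def G_def by (simp add: mev_mult[OF AQ])
    also have "\<dots> = 0\<^sub>m n n" by (rule mev_zero_dvd[OF AQ pA]) (metis pdvd1 mult.commute mult.left_commute)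
    finally have FVG: "F * (V * G) = 0\<^sub>m n n" .
    have Ga: "G *\<^sub>v a = 0\<^sub>v n" unfolding a_def
      by (rule mat_mult_zero_vec[OF G _ GUF xQ]) (use U F in simp)
    have Fb: "F *\<^sub>v b = 0\<^sub>v n" unfolding b_def
      by (rule mat_mult_zero_vec[OF F _ FVG xQ]) (use V G in simp)
    obtain c1 a' where c1: "c1 > 0" and a': "a' \<in> carrier_vec n" and ca: "map_vec of_int a' = of_int c1 \<cdot>\<^sub>v a"
      using clear_denom[OF a] by auto
    obtain c2 b' where c2: "c2 > 0" and b': "b' \<in> carrier_vec n" and cb: "map_vec of_int b' = of_int c2 \<cdot>\<^sub>v b"
      using clear_denom[OF b] by auto
    have "G *\<^sub>v map_vec of_int a' = 0\<^sub>v n" unfolding ca using G a Ga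
      by (simp add: mult_mat_vec[of _ n n]) (intro eq_vecI, auto)
    then obtain w2 where w2: "w2 \<in> carrier_vec d2" "a' = B2 *\<^sub>v w2" using span2 a' by blast
    have "F *\<^sub>v map_vec of_int b' = 0\<^sub>v n" unfolding cb using F b Fb
      by (simp add: mult_mat_vec[of _ n n]) (intro eq_vecI, auto)
    then obtain w1 where w1: "w1 \<in> carrier_vec d1" "b' = B1 *\<^sub>v w1" using span1 b' by blast
    define y where "y = (c1 \<cdot>\<^sub>v w1) @\<^sub>v (c2 \<cdot>\<^sub>v w2)"
    have y: "y \<in> carrier_vec m" unfolding y_def m_def using w1 w2 by auto
    have "P *\<^sub>v y = B1 *\<^sub>v (c1 \<cdot>\<^sub>v w1) + B2 *\<^sub>v (c2 \<cdot>\<^sub>v w2)"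
      unfolding P_def y_def using B1 B2 w1 w2 by (intro pcat_mult_vec) auto
    also have "\<dots> = c1 \<cdot>\<^sub>v b' + c2 \<cdot>\<^sub>v a'" using B1 B2 w1 w2 by (simp add: mult_mat_vec_smult)
    also have "\<dots> = (c1 * c2) \<cdot>\<^sub>v x"
    proof (intro eq_vecI)
      fix i assume "i < dim_vec ((c1 * c2) \<cdot>\<^sub>v x)"
      then have i: "i < n" using x by simp
      have e1: "rat_of_int (a' $ i) = of_int c1 * a $ i" using arg_cong[OF ca, of "\<lambda>v. v $ i"] i a a' by simp
      have e2: "rat_of_int (b' $ i) = of_int c2 * b $ i" using arg_cong[OF cb, of "\<lambda>v. v $ i"] i b b' by simp
      have e3: "rat_of_int (x $ i) = a $ i + b $ i" using arg_cong[OF xab, of "\<lambda>v. v $ i"] i a b x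
        unfolding xQ_def by simp
      have "rat_of_int (c1 * b' $ i + c2 * a' $ i) = rat_of_int (c1 * c2 * x $ i)"
        using e1 e2 e3 by (simp add: algebra_simps)
      then have "c1 * b' $ i + c2 * a' $ i = c1 * c2 * x $ i" by linarith
      then show "(c1 \<cdot>\<^sub>v b' + c2 \<cdot>\<^sub>v a') $ i = ((c1 * c2) \<cdot>\<^sub>v x) $ i" using i a' b' x by simp
    qed (use a' b' x in simp)
    finally show ?thesis using y c1 c2 by (intro exI[of _ "c1 * c2"] exI[of _ y]) auto
  qed
  have mle: "m \<le> n"
  proof (rule ccontr)
    assume nl: "\<not> m \<le> n"
    define P' where "P' = mat m m (\<lambda>(i,j). if i < n then P $$ (i,j) else 0)"
    have P': "P' \<in> carrier_mat m m" by (simp add: P'_def)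
    have "det P' = 0" by (rule zero_row_det[OF P', of "m - 1"]) (use nl in \<open>auto simp: P'_def\<close>)
    then obtain y where y: "y \<in> carrier_vec m" "y \<noteq> 0\<^sub>v m" "P' *\<^sub>v y = 0\<^sub>v m"
      using det_0_iff_vec_prod_zero[OF P'] by auto
    have "P *\<^sub>v y = 0\<^sub>v n"
    proof (intro eq_vecI)
      fix i assume "i < dim_vec (0\<^sub>v n :: int vec)"
      then have i: "i < n" by simp
      have rw: "row P' i = row P i" using P i nl unfolding P'_def by (intro eq_vecI) auto
      have "(P *\<^sub>v y) $ i = row P' i \<bullet> y" unfolding rw using P i by simp
      also have "\<dots> = (P' *\<^sub>v y) $ i" using P' i nl by simp
      also have "\<dots> = 0" using y(3) i nl by simp
      finally show "(P *\<^sub>v y) $ i = 0\<^sub>v n $ i" using i by simp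
    qed (use P in simp)
    then show False using Pinj y by blast
  qed
  have nle: "n \<le> m"
  proof (rule ccontr)
    assume nl: "\<not> n \<le> m"
    define P'' where "P'' = mat n n (\<lambda>(i,j). if j < m then P $$ (i,j) else 0)"
    have P'': "P'' \<in> carrier_mat n n" by (simp add: P''_def)
    have P''T: "transpose_mat P'' \<in> carrier_mat n n" using P'' by simp
    have "det (transpose_mat P'') = 0" by (rule zero_row_det[OF P''T, of "n - 1"]) (use nl in \<open>auto simp: P''_def\<close>)
    then obtain z where z: "z \<in> carrier_vec n" "z \<noteq> 0\<^sub>v n" "transpose_mat P'' *\<^sub>v z = 0\<^sub>v n"
      using det_0_iff_vec_prod_zero[OF P''T] by auto
    obtain c y where c: "c \<noteq> 0" and y: "y \<in> carrier_vec m" and Py: "P *\<^sub>v y = c \<cdot>\<^sub>v z"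
      using Psurj[OF z(1)] by blast
    define yp where "yp = vec n (\<lambda>j. if j < m then y $ j else 0)"
    have yp: "yp \<in> carrier_vec n" unfolding yp_def by simp
    have P''yp: "P'' *\<^sub>v yp = P *\<^sub>v y"
    proof (intro eq_vecI)
      fix i assume "i < dim_vec (P *\<^sub>v y)"
      then have i: "i < n" using P by simp
      have "(P'' *\<^sub>v yp) $ i = (\<Sum>j\<in>{0..<n}. P'' $$ (i,j) * yp $ j)" using P'' yp i by (simp add: scalar_prod_def)
      also have "\<dots> = (\<Sum>j\<in>{0..<m}. P'' $$ (i,j) * yp $ j)"
        using nl by (intro sum.mono_neutral_right) (auto simp: yp_def)
      also have "\<dots> = (\<Sum>j\<in>{0..<m}. P $$ (i,j) * y $ j)"
        using nl i by (intro sum.cong) (auto simp: yp_def P''_def)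
      also have "\<dots> = (P *\<^sub>v y) $ i" using P y i by (simp add: scalar_prod_def)
      finally show "(P'' *\<^sub>v yp) $ i = (P *\<^sub>v y) $ i" .
    qed (use P P'' in simp)
    have "(transpose_mat P'' *\<^sub>v z) \<bullet> yp = z \<bullet> (P'' *\<^sub>v yp)"
      by (rule transpose_vec_mult_scalar[OF P'' yp z(1)])
    then have "z \<bullet> (c \<cdot>\<^sub>v z) = 0" unfolding P''yp Py z(3) using yp by simp
    then have "c * (z \<bullet> z) = 0" using z(1) by simp
    then have "z \<bullet> z = 0" using c by simp
    then have "z = 0\<^sub>v n" by (rule self_scalar_zero[OF z(1)])
    then show False using z(2) by simp
  qed
  have mn: "m = n" using mle nle by simp
  have Pc: "P \<in> carrier_mat n n" using P mn by simp
  have detP: "det P \<noteq> 0"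
  proof
    assume "det P = 0"
    then obtain y where "y \<in> carrier_vec n" "y \<noteq> 0\<^sub>v n" "P *\<^sub>v y = 0\<^sub>v n"
      using det_0_iff_vec_prod_zero[OF Pc] by auto
    then show False using Pinj mn by auto
  qed
  have AP: "A * P = P * bdiag A1 A2"
    unfolding P_def using A B1 B2 A1 A2 AB1 AB2 by (simp add: mult_pcat pcat_mult_bdiag)
  define A1Q where "A1Q = map_mat (of_int :: int \<Rightarrow> rat) A1"
  define A2Q where "A2Q = map_mat (of_int :: int \<Rightarrow> rat) A2"
  have A1Q: "A1Q \<in> carrier_mat d1 d1" and A2Q: "A2Q \<in> carrier_mat d2 d2" unfolding A1Q_def A2Q_def using A1 A2 by auto
  have ABQ1: "AQ * B1Q = B1Q * A1Q" unfolding AQ_def B1Q_def A1Q_def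
    using of_int_hom.mat_hom_mult[OF A B1] of_int_hom.mat_hom_mult[OF B1 A1] AB1 by metis
  have ABQ2: "AQ * B2Q = B2Q * A2Q" unfolding AQ_def B2Q_def A2Q_def
    using of_int_hom.mat_hom_mult[OF A B2] of_int_hom.mat_hom_mult[OF B2 A2] AB2 by metis
  have M1: "mev (r ^ K) A1Q = 0\<^sub>m d1 d1"
  proof (rule zero_by_inj[OF B1 inj1])
    show "mev (r ^ K) A1Q \<in> carrier_mat d1 d1" using A1Q by simp
    have "map_mat of_int B1 * mev (r ^ K) A1Q = F * B1Q"
      unfolding F_def B1Q_def[symmetric] using mev_intertwine[OF AQ B1Q A1Q ABQ1] by simp
    then show "map_mat of_int B1 * mev (r ^ K) A1Q = 0\<^sub>m n d1" using FB1 by simp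
  qed
  have M2: "mev g A2Q = 0\<^sub>m d2 d2"
  proof (rule zero_by_inj[OF B2 inj2])
    show "mev g A2Q \<in> carrier_mat d2 d2" using A2Q by simp
    have "map_mat of_int B2 * mev g A2Q = G * B2Q"
      unfolding G_def B2Q_def[symmetric] using mev_intertwine[OF AQ B2Q A2Q ABQ2] by simp
    then show "map_mat of_int B2 * mev g A2Q = 0\<^sub>m n d2" using GB2 by simp
  qed
  have A1eig: "\<forall>z. int_eigenvalue A1 z \<longrightarrow> root_of_unity z"
  proof (intro allI impI)
    fix z assume "int_eigenvalue A1 z"
    then obtain x where x: "x \<in> carrier_vec d1" "x \<noteq> 0\<^sub>v d1" and Ax: "map_mat complex_of_int A1 *\<^sub>v x = z \<cdot>\<^sub>v x"
      using eig_obtain A1 by blast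
    have "map_mat of_rat A1Q = map_mat complex_of_int A1" unfolding A1Q_def by (intro eq_matI) auto
    then have "poly (map_poly of_rat (r ^ K)) z = 0" using mev_poly_zero[OF A1Q M1 x] Ax by simp
    then have "(z ^ N - 1) ^ K = 0" unfolding r_def poly_map_r .
    then have "z ^ N = 1" by simp
    then show "root_of_unity z" unfolding root_of_unity_def using Npos by blast
  qed
  have A2eig: "positive_mat A2"
    unfolding positive_mat_def
  proof (intro allI impI)
    fix z assume "int_eigenvalue A2 z"
    then obtain x where x: "x \<in> carrier_vec d2" "x \<noteq> 0\<^sub>v d2" and Ax: "map_mat complex_of_int A2 *\<^sub>v x = z \<cdot>\<^sub>v x"
      using eig_obtain A2 by blast
    have "map_mat of_rat A2Q = map_mat complex_of_int A2" unfolding A2Q_def by (intro eq_matI) auto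
    then have gz: "poly (map_poly of_rat g) z = 0" using mev_poly_zero[OF A2Q M2 x] Ax by simp
    define B2C where "B2C = map_mat (of_int :: int \<Rightarrow> complex) B2"
    define B1C where "B1C = map_mat (of_int :: int \<Rightarrow> complex) B1"
    define A2C where "A2C = map_mat (of_int :: int \<Rightarrow> complex) A2"
    have B2C: "B2C \<in> carrier_mat n d2" and B1C: "B1C \<in> carrier_mat n d1" and A2C: "A2C \<in> carrier_mat d2 d2"
      unfolding B2C_def B1C_def A2C_def using B1 B2 A2 by auto
    have ABC: "AC * B2C = B2C * A2C" unfolding AC_def B2C_def A2C_def
      using of_int_hom.mat_hom_mult[OF A B2] of_int_hom.mat_hom_mult[OF B2 A2] AB2 by metis
    define yv where "yv = B2C *\<^sub>v x"
    have yv: "yv \<in> carrier_vec n" unfolding yv_def using B2C x by simp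
    have Ay: "AC *\<^sub>v yv = z \<cdot>\<^sub>v yv"
    proof -
      have "AC *\<^sub>v yv = (AC * B2C) *\<^sub>v x" unfolding yv_def using AC B2C x by simp
      also have "\<dots> = B2C *\<^sub>v (A2C *\<^sub>v x)" unfolding ABC using B2C A2C x by simp
      also have "\<dots> = z \<cdot>\<^sub>v yv" unfolding yv_def A2C_def Ax using B2C x by (simp add: mult_mat_vec)
      finally show ?thesis .
    qed
    have y0: "yv \<noteq> 0\<^sub>v n"
    proof
      assume yz: "yv = 0\<^sub>v n"
      define PC where "PC = map_mat (of_int :: int \<Rightarrow> complex) P"
      have PC: "PC \<in> carrier_mat n n" unfolding PC_def using Pc by simp
      have PCe: "PC = pcat B1C B2C" unfolding PC_def P_def B1C_def B2C_def by (rule map_pcat[OF B1 B2])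
      define w where "w = 0\<^sub>v d1 @\<^sub>v x"
      have w: "w \<in> carrier_vec n" unfolding w_def using x mn m_def by auto
      have "PC *\<^sub>v w = B1C *\<^sub>v 0\<^sub>v d1 + B2C *\<^sub>v x" unfolding PCe w_def using B1C B2C x
        by (intro pcat_mult_vec) auto
      also have "\<dots> = 0\<^sub>v n" using B1C B2C x yz unfolding yv_def by (simp add: mat_vec_zero)
      finally have PCw: "PC *\<^sub>v w = 0\<^sub>v n" .
      have "w \<noteq> 0\<^sub>v n"
      proof
        assume "w = 0\<^sub>v n"
        have "\<forall>i<d2. x $ i = 0"
        proof (intro allI impI)
          fix i assume i: "i < d2"
          have "w $ (d1 + i) = 0" using \<open>w = 0\<^sub>v n\<close> i mn m_def by simp
          then show "x $ i = 0" unfolding w_def using x i by simp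
        qed
        then have "x = 0\<^sub>v d2" using x by (intro eq_vecI) auto
        then show False using x by simp
      qed
      then have "det PC = 0" using det_0_iff_vec_prod_zero[OF PC] w PCw by blast
      moreover have "det PC = of_int (det P)" unfolding PC_def by (rule of_int_hom.hom_det)
      ultimately show False using detP by simp
    qed
    have eAC: "eigenvalue AC z" unfolding eigenvalue_def eigenvector_def using yv y0 Ay AC by auto
    show "z \<noteq> 0 \<and> \<not> root_of_unity z"
    proof
      show "z \<noteq> 0"
      proof
        assume "z = 0"
        then have "AC *\<^sub>v yv = 0\<^sub>v n" using Ay yv by (intro eq_vecI) auto
        then have "det AC = 0" using det_0_iff_vec_prod_zero[OF AC] yv y0 by blast
        moreover have "det AC = of_int (det A)" unfolding AC_def by (rule of_int_hom.hom_det)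
        ultimately show False using dA by simp
      qed
      show "\<not> root_of_unity z"
      proof
        assume "root_of_unity z"
        then have zN: "z ^ N = 1" using Nprop eAC by blast
        obtain u' v' where uv': "u' * g + v' * r = 1"
          using bezout_coefficients[of g r] coprime_imp_gcd_eq_1[OF fg(3)] by (metis prod.collapse)
        have "poly (map_poly (of_rat :: rat \<Rightarrow> complex) (u' * g + v' * r)) z = 1" unfolding uv' by simp
        moreover have "poly (map_poly (of_rat :: rat \<Rightarrow> complex) r) z = 0"
          using poly_map_r[of N 1 z] zN unfolding r_def by simp
        ultimately show False using gz by (simp add: mpr.hom_add mpr.hom_mult)
      qed
    qed
  qed
  show ?thesis
    by (rule exI[of _ d1], rule exI[of _ d2], rule exI[of _ A1], rule exI[of _ A2], rule exI[of _ P])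
      (use mn m_def A1 A1eig A2 A2eig Pc detP AP in auto)
qed


theorem lemma2p6:
  fixes A :: "int mat" and n :: nat
  assumes "n \<ge> 1" and "A \<in> carrier_mat n n" and "det A \<noteq> 0"
  shows "\<exists>n1 n2 (A1 :: int mat) (A2 :: int mat) (P :: int mat).
           n1 + n2 = n \<and>
           A1 \<in> carrier_mat n1 n1 \<and> (\<forall>z. int_eigenvalue A1 z \<longrightarrow> root_of_unity z) \<and>
           A2 \<in> carrier_mat n2 n2 \<and> positive_mat A2 \<and>
           P \<in> carrier_mat n n \<and> det P \<noteq> 0 \<and>
           (\<forall>u \<in> (Gm n :: 'k :: {alg_closed_field, field_char_0} vec set).
              phi A (phi P u) = phi P (phi A1 (vec_first u n1) @\<^sub>v phi A2 (vec_last u n2)))"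
proof -
  have A: "A \<in> carrier_mat n n" by (rule assms(2))
  obtain d1 d2 A1 A2 P where d: "d1 + d2 = n" and A1: "A1 \<in> carrier_mat d1 d1"
    and A1e: "\<forall>z. int_eigenvalue A1 z \<longrightarrow> root_of_unity z" and A2: "A2 \<in> carrier_mat d2 d2"
    and A2p: "positive_mat A2" and P: "P \<in> carrier_mat n n" and dP: "det P \<noteq> 0"
    and AP: "A * P = P * bdiag A1 A2"
    using decomp[OF assms(2,3)] by blast
  have D: "bdiag A1 A2 \<in> carrier_mat n n" using A1 A2 d by (metis bdiag_carrier)
  have main: "phi A (phi P u) = phi P (phi A1 (vec_first u d1) @\<^sub>v phi A2 (vec_last u d2))"
    if u: "u \<in> (Gm n :: 'k vec set)" for u
  proof -
    have uc: "u \<in> carrier_vec n" and u0: "\<forall>i<n. u $ i \<noteq> 0" using u unfolding Gm_def by auto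
    have "phi A (phi P u) = phi (A * P) u" by (rule phi_mult[OF A P uc u0])
    also have "\<dots> = phi (P * bdiag A1 A2) u" unfolding AP ..
    also have "\<dots> = phi P (phi (bdiag A1 A2) u)" by (rule phi_mult[OF P D uc u0, symmetric])
    also have "phi (bdiag A1 A2) u = phi A1 (vec_first u d1) @\<^sub>v phi A2 (vec_last u d2)"
      by (rule phi_bdiag[OF A1 A2, symmetric]) (use uc d in simp)
    finally show ?thesis .
  qed
  show ?thesis
    by (rule exI[of _ d1], rule exI[of _ d2], rule exI[of _ A1], rule exI[of _ A2], rule exI[of _ P])
      (use d A1 A1e A2 A2p P dP main in auto)
qed


end
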